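(* Let $\mathfrak g$ and $\mathfrak g_0$ be real $3$-dimensional Lie algebras such that $\mathfrak g_0$ is a continuous contraction of $\mathfrak g$. Then there exist constant matrices $P,Q\in GL_3(\mathbb R)$ and nonnegative integers $\alpha_1,\alpha_2,\alpha_3$ such that $U_\varepsilon=P\,\mathrm{diag}(\varepsilon^{\alpha_1},\varepsilon^{\alpha_2},\varepsilon^{\alpha_3})\,Q$ is a contraction matrix contracting $\mathfrak g$ to a Lie algebra isomorphic to $\mathfrak g_0$. Moreover, unless $\mathfrak g\cong so(3)$ and $\mathfrak g_0\cong\mathfrak h_3$, the exponents can be chosen with $\alpha_1,\alpha_2,\alpha_3\in\{0,1\}$ (a simple In\"on\"u--Wigner contraction); whereas for $\mathfrak g\cong so(3)$, $\mathfrak g_0\cong\mathfrak h_3$ no matrix of this form with all $\alpha_i\in\{0,1\}$ contracts $\mathfrak g$ to an algebra isomorphic to $\mathfrak g_0$.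
   Context: Continuous contraction: for an $n$-dimensional Lie algebra $\mathfrak g=(V,[\cdot,\cdot])$ and a continuous map $U:(0,1]\to GL(V)$, put $[x,y]_\varepsilon=U_\varepsilon^{-1}[U_\varepsilon x,U_\varepsilon y]$; if $[x,y]_0=\lim_{\varepsilon\to0^+}[x,y]_\varepsilon$ exists for all $x,y$, then $(V,[\cdot,\cdot]_0)$ is a contraction of $\mathfrak g$ and $U$ its contraction matrix (matrices taken in a fixed basis). $so(3)$ has basis with $[e_1,e_2]=e_3$, $[e_2,e_3]=e_1$, $[e_3,e_1]=e_2$; $\mathfrak h_3$ is the Heisenberg algebra with only nonzero bracket $[e_2,e_3]=e_1$. *)

theory Defs
  imports "HOL-Analysis.Analysis"
begin

text \<open>A real 3-dimensional Lie algebra is modelled as a bracket on the fixed space real^3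
  (coordinates w.r.t. a fixed basis e_1, e_2, e_3).\<close>

type_synonym bracket = "real^3 \<Rightarrow> real^3 \<Rightarrow> real^3"

definition lie_bracket :: "bracket \<Rightarrow> bool" where
  "lie_bracket br \<longleftrightarrow> bilinear br \<and> (\<forall>x. br x x = 0) \<and>
     (\<forall>x y z. br x (br y z) + br y (br z x) + br z (br x y) = 0)"

definition lie_iso :: "bracket \<Rightarrow> bracket \<Rightarrow> bool" where
  "lie_iso br1 br2 \<longleftrightarrow> (\<exists>A :: real^3^3. invertible A \<and>
     (\<forall>x y. A *v br1 x y = br2 (A *v x) (A *v y)))"

definition contracts_via :: "bracket \<Rightarrow> (real \<Rightarrow> real^3^3) \<Rightarrow> bracket \<Rightarrow> bool" where
  "contracts_via br U br0 \<longleftrightarrow>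
     continuous_on {0<..1} U \<and> (\<forall>\<epsilon>\<in>{0<..1}. invertible (U \<epsilon>)) \<and>
     (\<forall>x y. ((\<lambda>\<epsilon>. matrix_inv (U \<epsilon>) *v br (U \<epsilon> *v x) (U \<epsilon> *v y)) \<longlongrightarrow> br0 x y)
              (at_right 0))"

definition continuous_contraction :: "bracket \<Rightarrow> bracket \<Rightarrow> bool" where
  "continuous_contraction br br0 \<longleftrightarrow> (\<exists>U. contracts_via br U br0)"

definition diag_pow :: "real \<Rightarrow> (3 \<Rightarrow> nat) \<Rightarrow> real^3^3" where
  "diag_pow \<epsilon> \<alpha> = (\<chi> i j. if i = j then \<epsilon> ^ \<alpha> i else 0)"

definition so3_br :: bracket where
  "so3_br x y = vector [x$2*y$3 - x$3*y$2, x$3*y$1 - x$1*y$3, x$1*y$2 - x$2*y$1]"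

definition h3_br :: bracket where
  "h3_br x y = vector [x$2*y$3 - x$3*y$2, 0, 0]"

end

theory Submission
  imports Defs
begin

definition crs :: "real^3 \<Rightarrow> real^3 \<Rightarrow> real^3" where
  "crs x y = vector [x$2*y$3 - x$3*y$2, x$3*y$1 - x$1*y$3, x$1*y$2 - x$2*y$1]"

definition mk :: "real^3^3 \<Rightarrow> real^3 \<Rightarrow> bracket" where
  "mk N a x y = N *v crs x y + (a \<bullet> x) *\<^sub>R y - (a \<bullet> y) *\<^sub>R x"

definition act :: "real^3^3 \<Rightarrow> bracket \<Rightarrow> bracket" where
  "act U br x y = matrix_inv U *v br (U *v x) (U *v y)"

lemmas CS = vec_eq_iff forall_3 matrix_matrix_mult_def matrix_vector_mult_def sum_3
  transpose_def inner_vec_def mat_def crs_def det_3 inner_real_def vector_matrix_mult_def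

lemma crs_key: "transpose U *v crs (U *v x) (U *v y) = det U *\<^sub>R crs (x::real^3) y"
  by (simp add: CS algebra_simps)

lemma mv_add: "(A::real^3^3) *v (x + y) = A *v x + A *v y"
  by (simp add: CS algebra_simps)
lemma mv_diff: "(A::real^3^3) *v (x - y) = A *v x - A *v y"
  by (simp add: CS algebra_simps)

lemma inv_ok: assumes "invertible (U::real^3^3)"
  shows "U ** matrix_inv U = mat 1" "matrix_inv U ** U = mat 1"
  using someI_ex[OF assms[unfolded invertible_def]] unfolding matrix_inv_def by auto

lemma inv_unique: assumes "(U::real^3^3) ** M = mat 1" shows "matrix_inv U = M"
proof -
  have inv: "invertible U" using assms invertible_right_inverse by blast
  have "matrix_inv U = matrix_inv U ** (U ** M)" by (simp add: assms)
  also have "\<dots> = (matrix_inv U ** U) ** M" by (simp add: matrix_mul_assoc)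
  also have "\<dots> = M" using inv_ok(2)[OF inv] by simp
  finally show ?thesis .
qed

lemma inv_inv: assumes "(U::real^3^3) ** M = mat 1" shows "M ** U = mat 1"
  using assms matrix_left_right_inverse by blast

lemma crs_trans: assumes "(U::real^3^3) ** M = mat 1"
  shows "crs (U *v x) (U *v y) = det U *\<^sub>R (transpose M *v crs x y)"
proof -
  have "crs (U *v x) (U *v y) = (transpose M ** transpose U) *v crs (U *v x) (U *v y)"
    using assms by (simp del: transpose_matrix_vector add: matrix_transpose_mul[symmetric] transpose_mat)
  also have "\<dots> = transpose M *v (transpose U *v crs (U *v x) (U *v y))"
    by (simp only: matrix_vector_mul_assoc)
  also have "\<dots> = det U *\<^sub>R (transpose M *v crs x y)"
    by (simp only: crs_key matrix_vector_mult_scaleR)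
  finally show ?thesis .
qed

lemma act_mk: assumes UM: "(U::real^3^3) ** M = mat 1"
  shows "act U (mk N a) = mk (det U *\<^sub>R (M ** N ** transpose M)) (transpose U *v a)"
proof (intro ext)
  fix x y :: "real^3"
  have MU: "M ** U = mat 1" using inv_inv[OF UM] .
  have mi: "matrix_inv U = M" using inv_unique[OF UM] .
  have dx: "a \<bullet> (U *v x) = (transpose U *v a) \<bullet> x" for x
    by (simp add: dot_lmul_matrix)
  have "act U (mk N a) x y = M *v (N *v crs (U *v x) (U *v y)) + (a \<bullet> (U *v x)) *\<^sub>R (M *v (U *v y))
        - (a \<bullet> (U *v y)) *\<^sub>R (M *v (U *v x))"
    by (simp add: act_def mk_def mi mv_add mv_diff matrix_vector_mult_scaleR)
  also have "\<dots> = mk (det U *\<^sub>R (M ** N ** transpose M)) (transpose U *v a) x y"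
    unfolding mk_def crs_trans[OF UM] dx
    apply (simp del: transpose_matrix_vector add: matrix_vector_mul_assoc MU matrix_vector_mult_scaleR)
    by (simp add: CS algebra_simps sum_distrib_left)
  finally show "act U (mk N a) x y = mk (det U *\<^sub>R (M ** N ** transpose M)) (transpose U *v a) x y" .
qed

definition E1 :: "real^3" where "E1 = vector [1,0,0]"
definition E2 :: "real^3" where "E2 = vector [0,1,0]"
definition E3 :: "real^3" where "E3 = vector [0,0,1]"

definition symm :: "real^3^3 \<Rightarrow> bool" where "symm N \<longleftrightarrow> (\<forall>i j. N$i$j = N$j$i)"

definition bcol :: "bracket \<Rightarrow> 3 \<Rightarrow> real^3" where
  "bcol br i = (if i = 1 then br E2 E3 else if i = 2 then br E3 E1 else br E1 E2)"

definition getN :: "bracket \<Rightarrow> real^3^3" where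
  "getN br = (\<chi> k i. (bcol br i $ k + bcol br k $ i) / 2)"

definition geta :: "bracket \<Rightarrow> real^3" where
  "geta br = vector [(bcol br 3 $ 2 - bcol br 2 $ 3)/2, (bcol br 1 $ 3 - bcol br 3 $ 1)/2,
                     (bcol br 2 $ 1 - bcol br 1 $ 2)/2]"

lemma symmE: "symm N \<Longrightarrow> N$2$1 = N$1$2 \<and> N$3$1 = N$1$3 \<and> N$3$2 = N$2$3"
  by (simp add: symm_def)

lemma symm_getN: "symm (getN br)"
  by (simp add: symm_def getN_def)

lemma getN_mk: "symm N \<Longrightarrow> getN (mk N a) = N"
  apply (drule symmE)
  by (simp add: getN_def bcol_def mk_def E1_def E2_def E3_def CS)

lemma geta_mk: "symm N \<Longrightarrow> geta (mk N a) = a"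
  apply (drule symmE)
  by (simp add: geta_def bcol_def mk_def E1_def E2_def E3_def CS)

lemma expand3: "x$1 *\<^sub>R E1 + x$2 *\<^sub>R E2 + x$3 *\<^sub>R (E3::real^3) = x"
  by (simp add: CS E1_def E2_def E3_def)

lemma rep_mk: assumes "lie_bracket br" shows "br = mk (getN br) (geta br)"
proof (intro ext)
  fix x y :: "real^3"
  have bil: "bilinear br" and alt: "\<And>x. br x x = 0" using assms by (auto simp: lie_bracket_def)
  have anti: "br v u = - br u v" for u v
  proof -
    have e: "br (u+v) (u+v) = br u u + br v u + (br u v + br v v)"
      by (simp only: bilinear_ladd[OF bil] bilinear_radd[OF bil])
    have h: "br u v + br v u = 0" using e alt[of "u+v"] alt[of u] alt[of v] by (simp add: add.commute)
    show ?thesis by (metis eq_neg_iff_add_eq_0 add.commute h)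
  qed
  have "br x y = br (x$1 *\<^sub>R E1 + x$2 *\<^sub>R E2 + x$3 *\<^sub>R E3) (y$1 *\<^sub>R E1 + y$2 *\<^sub>R E2 + y$3 *\<^sub>R E3)"
    by (simp only: expand3)
  also have "\<dots> = (x$2*y$3 - x$3*y$2) *\<^sub>R br E2 E3 + (x$3*y$1 - x$1*y$3) *\<^sub>R br E3 E1
      + (x$1*y$2 - x$2*y$1) *\<^sub>R br E1 E2"
    by (simp add: bilinear_ladd[OF bil] bilinear_radd[OF bil] bilinear_lmul[OF bil] bilinear_rmul[OF bil]
       alt anti[of E1 E2] anti[of E1 E3] anti[of E2 E3] algebra_simps)
  also have "\<dots> = mk (getN br) (geta br) x y"
    by (simp add: getN_def geta_def bcol_def mk_def CS) (simp_all add: field_simps)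
  finally show "br x y = mk (getN br) (geta br) x y" .
qed

lemma jacobi_mk: "symm N \<Longrightarrow> mk N a E1 (mk N a E2 E3) + mk N a E2 (mk N a E3 E1) + mk N a E3 (mk N a E1 E2)
   = (-2) *\<^sub>R (N *v a)"
  apply (drule symmE)
  apply (simp add: mk_def E1_def E2_def E3_def CS)
  by (auto simp: algebra_simps)

lemma rep: assumes "lie_bracket br"
  shows "br = mk (getN br) (geta br)" "symm (getN br)" "getN br *v geta br = 0"
proof -
  show r: "br = mk (getN br) (geta br)" by (rule rep_mk[OF assms])
  show s: "symm (getN br)" by (rule symm_getN)
  have "br E1 (br E2 E3) + br E2 (br E3 E1) + br E3 (br E1 E2) = 0"
    using assms by (simp add: lie_bracket_def)
  then have "(-2) *\<^sub>R (getN br *v geta br) = 0"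
    using jacobi_mk[OF s, of "geta br"] r by metis
  then show "getN br *v geta br = 0" by simp
qed

lemma act_comp: assumes "invertible U" "invertible V"
  shows "act U (act V br) = act (V ** U) br"
proof (intro ext)
  fix x y
  have "(V ** U) ** (matrix_inv U ** matrix_inv V) = mat 1"
    by (metis assms inv_ok(1) matrix_mul_assoc matrix_mul_rid)
  then have e: "matrix_inv (V ** U) = matrix_inv U ** matrix_inv V" by (rule inv_unique)
  show "act U (act V br) x y = act (V ** U) br x y"
    by (simp add: act_def e matrix_vector_mul_assoc)
qed

lemma act_id: "act (mat 1) br = br"
proof -
  have "matrix_inv (mat 1 :: real^3^3) = mat 1" by (rule inv_unique) simp
  then show ?thesis by (simp add: act_def[abs_def])
qed

lemma invertible_inv: "invertible (U::real^3^3) \<Longrightarrow> invertible (matrix_inv U)"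
  using inv_ok unfolding invertible_def by blast

lemma act_inv: "invertible (U::real^3^3) \<Longrightarrow> act (matrix_inv U) (act U br) = br"
  by (simp add: act_comp invertible_inv inv_ok act_id)

lemma act_inv2: "invertible (U::real^3^3) \<Longrightarrow> act U (act (matrix_inv U) br) = br"
  by (simp add: act_comp invertible_inv inv_ok act_id)

lemma lie_iso_act: "lie_iso br1 br2 \<longleftrightarrow> (\<exists>A. invertible A \<and> br1 = act A br2)"
proof
  assume "lie_iso br1 br2"
  then obtain A where A: "invertible A" "\<And>x y. A *v br1 x y = br2 (A *v x) (A *v y)"
    unfolding lie_iso_def by blast
  have "br1 = act A br2"
  proof (intro ext)
    fix x y
    have "br1 x y = matrix_inv A *v (A *v br1 x y)"
      by (simp add: matrix_vector_mul_assoc inv_ok[OF A(1)])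
    then show "br1 x y = act A br2 x y" by (simp add: act_def A(2))
  qed
  then show "\<exists>A. invertible A \<and> br1 = act A br2" using A(1) by blast
next
  assume "\<exists>A. invertible A \<and> br1 = act A br2"
  then obtain A where A: "invertible A" "br1 = act A br2" by blast
  have "A *v br1 x y = br2 (A *v x) (A *v y)" for x y
    by (simp add: A(2) act_def matrix_vector_mul_assoc inv_ok[OF A(1)])
  then show "lie_iso br1 br2" unfolding lie_iso_def using A(1) by blast
qed

lemma lie_iso_refl: "lie_iso br br"
  unfolding lie_iso_act
  by (rule exI[of _ "mat 1"]) (simp add: act_id invertible_def)

lemma lie_iso_sym: "lie_iso br1 br2 \<Longrightarrow> lie_iso br2 br1"
  unfolding lie_iso_act
  by (metis act_inv invertible_inv)

lemma lie_iso_trans: "lie_iso br1 br2 \<Longrightarrow> lie_iso br2 br3 \<Longrightarrow> lie_iso br1 br3"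
  unfolding lie_iso_act
  by (metis act_comp invertible_mult)

lemma lie_iso_actI: "invertible U \<Longrightarrow> lie_iso br (act U br)"
  by (metis lie_iso_act lie_iso_sym)

lemma cont_mmult: assumes "continuous_on S U" "continuous_on S V"
  shows "continuous_on S (\<lambda>e. (U e :: real^3^3) ** V e)"
proof -
  have e: "(\<lambda>e. U e ** V e) = (\<lambda>e. \<chi> i j. \<Sum>k\<in>UNIV. U e $ i $ k * V e $ k $ j)"
    by (simp add: matrix_matrix_mult_def)
  have "continuous_on S (\<lambda>e. \<chi> i j. \<Sum>k\<in>UNIV. U e $ i $ k * V e $ k $ j)"
    by (intro continuous_on_vec_lambda continuous_intros continuous_on_component assms)
  then show ?thesis unfolding e .
qed

lemma tendsto_mv: "((\<lambda>e. f e) \<longlongrightarrow> l) F \<Longrightarrow> ((\<lambda>e. (B::real^3^3) *v f e) \<longlongrightarrow> B *v l) F"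
  by (rule bounded_linear.tendsto[OF matrix_vector_mul_bounded_linear])

lemma contr_src: assumes B: "invertible B" and c: "contracts_via (act B br) U L"
  shows "contracts_via br (\<lambda>e. B ** U e) L"
  unfolding contracts_via_def
proof (intro conjI ballI allI)
  show "continuous_on {0<..1} (\<lambda>e. B ** U e)"
    using c unfolding contracts_via_def by (intro cont_mmult continuous_on_const) auto
next
  fix e :: real assume "e \<in> {0<..1}"
  then show "invertible (B ** U e)" using c B unfolding contracts_via_def by (auto intro: invertible_mult)
next
  fix x y
  have lim: "((\<lambda>e. act (U e) (act B br) x y) \<longlongrightarrow> L x y) (at_right 0)"
    using c unfolding contracts_via_def act_def[of "U _" "act B br"] by auto
  have ev: "\<forall>\<^sub>F e in at_right 0. act (U e) (act B br) x y = act (B ** U e) br x y"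
  proof -
    have "\<forall>\<^sub>F e in at_right (0::real). e \<in> {0<..<1}" by (rule eventually_at_right_real) simp
    then show ?thesis
    proof (rule eventually_mono)
      fix e :: real assume "e \<in> {0<..<1}"
      then have "invertible (U e)" using c unfolding contracts_via_def by auto
      then show "act (U e) (act B br) x y = act (B ** U e) br x y" by (simp add: act_comp B)
    qed
  qed
  show "((\<lambda>e. matrix_inv (B ** U e) *v br ((B ** U e) *v x) ((B ** U e) *v y)) \<longlongrightarrow> L x y) (at_right 0)"
    using tendsto_cong[OF ev] lim unfolding act_def by simp
qed

lemma contr_tgt: assumes B: "invertible B" and c: "contracts_via br U L"
  shows "contracts_via br (\<lambda>e. U e ** B) (act B L)"
  unfolding contracts_via_def
proof (intro conjI ballI allI)
  show "continuous_on {0<..1} (\<lambda>e. U e ** B)"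
    using c unfolding contracts_via_def by (intro cont_mmult continuous_on_const) auto
next
  fix e :: real assume "e \<in> {0<..1}"
  then show "invertible (U e ** B)" using c B unfolding contracts_via_def by (auto intro: invertible_mult)
next
  fix x y
  have lim: "((\<lambda>e. act (U e) br (B *v x) (B *v y)) \<longlongrightarrow> L (B *v x) (B *v y)) (at_right 0)"
    using c unfolding contracts_via_def act_def by auto
  have lim2: "((\<lambda>e. act B (act (U e) br) x y) \<longlongrightarrow> act B L x y) (at_right 0)"
    unfolding act_def[of B] by (rule tendsto_mv) (use lim in \<open>simp add: act_def\<close>)
  have ev: "\<forall>\<^sub>F e in at_right 0. act B (act (U e) br) x y = act (U e ** B) br x y"
  proof -
    have "\<forall>\<^sub>F e in at_right (0::real). e \<in> {0<..<1}" by (rule eventually_at_right_real) simp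
    then show ?thesis
    proof (rule eventually_mono)
      fix e :: real assume "e \<in> {0<..<1}"
      then have "invertible (U e)" using c unfolding contracts_via_def by auto
      then show "act B (act (U e) br) x y = act (U e ** B) br x y" by (simp add: act_comp B)
    qed
  qed
  show "((\<lambda>e. matrix_inv (U e ** B) *v br ((U e ** B) *v x) ((U e ** B) *v y)) \<longlongrightarrow> act B L x y) (at_right 0)"
    using tendsto_cong[OF ev] lim2 unfolding act_def by simp
qed

lemma contr_const: assumes "invertible A" shows "contracts_via br (\<lambda>_. A) (act A br)"
  using assms unfolding contracts_via_def act_def by (auto intro: continuous_on_const)

lemma iso_contr: "lie_iso br1 br2 \<Longrightarrow> \<exists>A. contracts_via br2 (\<lambda>_. A) br1"
  unfolding lie_iso_act using contr_const by blast

definition NN :: "real^3^3 \<Rightarrow> real^3^3 \<Rightarrow> real^3^3" where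
  "NN U N = det U *\<^sub>R (matrix_inv U ** N ** transpose (matrix_inv U))"

definition adj3 :: "real^3^3 \<Rightarrow> real^3^3" where
  "adj3 X = vector [
     vector [X$2$2*X$3$3 - X$2$3*X$3$2, X$1$3*X$3$2 - X$1$2*X$3$3, X$1$2*X$2$3 - X$1$3*X$2$2],
     vector [X$2$3*X$3$1 - X$2$1*X$3$3, X$1$1*X$3$3 - X$1$3*X$3$1, X$1$3*X$2$1 - X$1$1*X$2$3],
     vector [X$2$1*X$3$2 - X$2$2*X$3$1, X$1$2*X$3$1 - X$1$1*X$3$2, X$1$1*X$2$2 - X$1$2*X$2$1]]"

definition outer :: "real^3 \<Rightarrow> real^3^3" where "outer a = (\<chi> i j. a$i * a$j)"
definition qf :: "real^3^3 \<Rightarrow> real^3 \<Rightarrow> real" where "qf N v = v \<bullet> (N *v v)"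
definition psd :: "real^3^3 \<Rightarrow> bool" where "psd N \<longleftrightarrow> (\<forall>v. qf N v \<ge> 0)"
definition nsd :: "real^3^3 \<Rightarrow> bool" where "nsd N \<longleftrightarrow> (\<forall>v. qf N v \<le> 0)"

lemma symm_conj: "symm N \<Longrightarrow> symm (c *\<^sub>R (M ** N ** transpose M))"
  apply (drule symmE) unfolding symm_def
  by (simp add: CS) (auto simp: algebra_simps)

lemma adj_mult: "adj3 (X ** Y) = adj3 Y ** adj3 X"
  by (simp add: adj3_def CS) (auto simp: algebra_simps)

lemma adj_transpose: "adj3 (transpose X) = transpose (adj3 X)"
  by (simp add: adj3_def CS)

lemma adj_scale: "adj3 (c *\<^sub>R X) = (c*c) *\<^sub>R adj3 X"
  by (simp add: adj3_def CS) (auto simp: algebra_simps)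

lemma adj_left: "adj3 X ** X = det X *\<^sub>R mat 1"
  by (simp add: adj3_def CS) (auto simp: algebra_simps)

lemma det_scale3: "det (c *\<^sub>R (X::real^3^3)) = c^3 * det X"
  by (simp add: CS) (auto simp: algebra_simps power3_eq_cube)

lemma outer_trans: "outer (transpose U *v a) = transpose U ** outer a ** U"
  by (simp add: outer_def CS) (auto simp: algebra_simps sum_distrib_left)

lemma qf_conj: "qf (c *\<^sub>R (M ** N ** transpose M)) v = c * qf N (transpose M *v v)"
  by (simp add: qf_def CS) (auto simp: algebra_simps)

lemma qf_tconj: "qf (transpose U ** X ** U) v = qf X (U *v v)"
  by (simp add: qf_def CS) (auto simp: algebra_simps)

lemma adj_inv: assumes "(M::real^3^3) ** U = mat 1" shows "adj3 M = det M *\<^sub>R U"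
proof -
  have "adj3 M = adj3 M ** (M ** U)" by (simp add: assms)
  also have "\<dots> = (adj3 M ** M) ** U" by (simp add: matrix_mul_assoc)
  also have "\<dots> = det M *\<^sub>R U" by (simp add: adj_left) (simp add: CS)
  finally show ?thesis .
qed

lemma adj_NN: assumes "invertible U" shows "adj3 (NN U N) = transpose U ** adj3 N ** U"
proof -
  let ?M = "matrix_inv U"
  have MU: "?M ** U = mat 1" and UM: "U ** ?M = mat 1" using inv_ok[OF assms] by auto
  have d: "det U * det ?M = 1" using UM by (metis det_I det_mul)
  have aM: "adj3 ?M = det ?M *\<^sub>R U" by (rule adj_inv[OF MU])
  have "adj3 (NN U N) = (det U * det U) *\<^sub>R (adj3 (transpose ?M) ** (adj3 N ** adj3 ?M))"
    by (simp add: NN_def adj_scale adj_mult)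
  also have "\<dots> = ((det U * det ?M) * (det U * det ?M)) *\<^sub>R (transpose U ** adj3 N ** U)"
    by (simp add: adj_transpose aM transpose_scalar matrix_scalar_ac matrix_mul_assoc
          scalar_matrix_assoc algebra_simps)
  also have "\<dots> = transpose U ** adj3 N ** U" using d by simp
  finally show ?thesis .
qed

lemma det_NN: assumes "invertible U" shows "det (NN U N) = det U * det N"
proof -
  let ?M = "matrix_inv U"
  have UM: "U ** ?M = mat 1" using inv_ok[OF assms] by auto
  have d: "det U * det ?M = 1" using UM by (metis det_I det_mul)
  have "det (NN U N) = det U ^ 3 * (det ?M * det N * det ?M)"
    by (simp add: NN_def det_scale3 det_mul)
  also have "\<dots> = det U * (det U * det ?M) * (det U * det ?M) * det N"
    by (simp add: power3_eq_cube algebra_simps)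
  finally show ?thesis using d by simp
qed

definition mconv :: "(real \<Rightarrow> real^3^3) \<Rightarrow> real^3^3 \<Rightarrow> bool" where
  "mconv X X0 \<longleftrightarrow> (\<forall>i j. ((\<lambda>e. X e $ i $ j) \<longlongrightarrow> X0 $ i $ j) (at_right 0))"
definition vconv :: "(real \<Rightarrow> real^3) \<Rightarrow> real^3 \<Rightarrow> bool" where
  "vconv X X0 \<longleftrightarrow> (\<forall>i. ((\<lambda>e. X e $ i) \<longlongrightarrow> X0 $ i) (at_right 0))"

lemma ev01: "\<forall>\<^sub>F e in at_right (0::real). e \<in> {0<..1}"
proof -
  have "\<forall>\<^sub>F e in at_right (0::real). e \<in> {0<..<1}" by (rule eventually_at_right_real) simp
  then show ?thesis by (rule eventually_mono) auto
qed

lemma ev_inv: "contracts_via br U L \<Longrightarrow> \<forall>\<^sub>F e in at_right 0. invertible (U e)"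
  using ev01 unfolding contracts_via_def by (auto elim: eventually_mono)

lemmas TI = tendsto_add tendsto_diff tendsto_mult tendsto_divide tendsto_const tendsto_minus

lemma bcol_tendsto: assumes "\<And>x y. ((\<lambda>e. f e x y) \<longlongrightarrow> g x y) F"
  shows "((\<lambda>e. bcol (f e) j) \<longlongrightarrow> bcol g j) F"
  using exhaust_3[of j] by (auto simp: bcol_def intro: assms)

lemma getN_tendsto: assumes "\<And>x y. ((\<lambda>e. f e x y) \<longlongrightarrow> g x y) F"
  shows "((\<lambda>e. getN (f e) $ i $ j) \<longlongrightarrow> getN g $ i $ j) F"
  unfolding getN_def by (simp, intro TI tendsto_vec_nth bcol_tendsto assms) simp

lemma geta_tendsto: assumes "\<And>x y. ((\<lambda>e. f e x y) \<longlongrightarrow> g x y) F"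
  shows "((\<lambda>e. geta (f e) $ i) \<longlongrightarrow> geta g $ i) F"
  using exhaust_3[of i] unfolding geta_def
  by (elim disjE; simp; intro TI tendsto_vec_nth bcol_tendsto assms; simp)

lemma lim_eq: fixes f g :: "real \<Rightarrow> real"
  assumes "(f \<longlongrightarrow> l) (at_right 0)" "(g \<longlongrightarrow> m) (at_right 0)" "\<forall>\<^sub>F e in at_right 0. f e = g e"
  shows "l = m"
proof -
  have "(g \<longlongrightarrow> l) (at_right 0)" using tendsto_cong[OF assms(3)] assms(1) by simp
  then show ?thesis using tendsto_unique[OF trivial_limit_at_right_real] assms(2) by blast
qed

lemma contr_lim: assumes c: "contracts_via (mk N a) U (mk N0 a0)" and s: "symm N" "symm N0"
  shows "mconv (\<lambda>e. NN (U e) N) N0" "vconv (\<lambda>e. transpose (U e) *v a) a0"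
proof -
  have lim: "\<And>x y. ((\<lambda>e. act (U e) (mk N a) x y) \<longlongrightarrow> mk N0 a0 x y) (at_right 0)"
    using c unfolding contracts_via_def act_def by auto
  have ev: "\<forall>\<^sub>F e in at_right 0. act (U e) (mk N a) = mk (NN (U e) N) (transpose (U e) *v a)"
    using ev_inv[OF c] by (rule eventually_mono) (simp add: act_mk[OF inv_ok(1)] NN_def)
  have sNN: "symm (NN U' N)" for U' unfolding NN_def by (rule symm_conj[OF s(1)])
  show "mconv (\<lambda>e. NN (U e) N) N0" unfolding mconv_def
  proof (intro allI)
    fix i j
    have t: "((\<lambda>e. getN (act (U e) (mk N a)) $ i $ j) \<longlongrightarrow> getN (mk N0 a0) $ i $ j) (at_right 0)"
      by (rule getN_tendsto[OF lim])
    have "\<forall>\<^sub>F e in at_right 0. getN (act (U e) (mk N a)) $ i $ j = NN (U e) N $ i $ j"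
      using ev by (rule eventually_mono) (simp add: getN_mk sNN)
    then show "((\<lambda>e. NN (U e) N $ i $ j) \<longlongrightarrow> N0 $ i $ j) (at_right 0)"
      using tendsto_cong t getN_mk[OF s(2)] by fastforce
  qed
  show "vconv (\<lambda>e. transpose (U e) *v a) a0" unfolding vconv_def
  proof (intro allI)
    fix i
    have t: "((\<lambda>e. geta (act (U e) (mk N a)) $ i) \<longlongrightarrow> geta (mk N0 a0) $ i) (at_right 0)"
      by (rule geta_tendsto[OF lim])
    have "\<forall>\<^sub>F e in at_right 0. geta (act (U e) (mk N a)) $ i = (transpose (U e) *v a) $ i"
      using ev by (rule eventually_mono) (simp add: geta_mk sNN)
    then show "((\<lambda>e. (transpose (U e) *v a) $ i) \<longlongrightarrow> a0 $ i) (at_right 0)"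
      using tendsto_cong t geta_mk[OF s(2)] by fastforce
  qed
qed

lemma adj_tendsto: "mconv X X0 \<Longrightarrow> mconv (\<lambda>e. adj3 (X e)) (adj3 X0)"
  unfolding mconv_def
  apply (intro allI)
  subgoal for i j
    using exhaust_3[of i] exhaust_3[of j]
    by (auto simp: adj3_def intro!: TI)
  done

lemma outer_tendsto: "vconv X X0 \<Longrightarrow> mconv (\<lambda>e. outer (X e)) (outer X0)"
  unfolding mconv_def vconv_def outer_def by (auto intro!: TI)

lemma det_tendsto: "mconv X X0 \<Longrightarrow> ((\<lambda>e. det (X e)) \<longlongrightarrow> det X0) (at_right 0)"
  unfolding mconv_def det_3 by (auto intro!: TI)

lemma qf_tendsto: "mconv X X0 \<Longrightarrow> ((\<lambda>e. qf (X e) v) \<longlongrightarrow> qf X0 v) (at_right 0)"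
  unfolding mconv_def qf_def by (simp add: CS del: transpose_matrix_vector) (auto intro!: TI)

lemma mconvD: "mconv X X0 \<Longrightarrow> ((\<lambda>e. X e $ i $ j) \<longlongrightarrow> X0 $ i $ j) (at_right 0)"
  by (simp add: mconv_def)
lemma vconvD: "vconv X X0 \<Longrightarrow> ((\<lambda>e. X e $ i) \<longlongrightarrow> X0 $ i) (at_right 0)"
  by (simp add: vconv_def)

lemma sign_contra: "(d::real) * p < 0 \<Longrightarrow> d * q > 0 \<Longrightarrow> (0 \<le> p \<and> 0 \<le> q) \<or> (p \<le> 0 \<and> q \<le> 0) \<Longrightarrow> False"
  by (auto simp: mult_less_0_iff zero_less_mult_iff)

lemma bnd1: "\<bar>x - d\<bar> < 1/9 \<Longrightarrow> (x::real) * (p*q) \<ge> d*(p*q) - (p*p + q*q)/18"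
proof -
  assume h: "\<bar>x - d\<bar> < 1/9"
  have pq: "\<bar>p*q\<bar> \<le> (p*p + q*q)/2"
  proof -
    have "0 \<le> (\<bar>p\<bar> - \<bar>q\<bar>)^2" by simp
    then show ?thesis by (simp add: power2_eq_square algebra_simps abs_mult)
  qed
  have "\<bar>(x - d) * (p*q)\<bar> \<le> (1/9) * \<bar>p*q\<bar>"
    unfolding abs_mult by (rule mult_right_mono) (use h in auto)
  then have "(x - d) * (p*q) \<ge> - (p*p + q*q)/18" using pq by (auto simp: abs_le_iff)
  moreover have "(x - d) * (p*q) = x*(p*q) - d*(p*q)" by (simp add: algebra_simps)
  ultimately show ?thesis by linarith
qed

lemma lin_aux: "8*a \<le> A*9 \<Longrightarrow> -((a+b)/18) \<le> P \<Longrightarrow> -((a+c)/18) \<le> Q \<Longrightarrow>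
  -((b+a)/18) \<le> P' \<Longrightarrow> 8*b \<le> B*9 \<Longrightarrow> -((b+c)/18) \<le> R \<Longrightarrow> -((c+a)/18) \<le> Q' \<Longrightarrow>
  -((c+b)/18) \<le> R' \<Longrightarrow> 8*c \<le> C*9 \<Longrightarrow> 0 < a+b+(c::real) \<Longrightarrow> 0 < A + P + Q + P' + B + R + Q' + R' + C"
  by (simp add: field_simps)

lemma pos_near_id: assumes h: "\<forall>i j. \<bar>X$i$j - (mat 1 :: real^3^3)$i$j\<bar> < 1/9" and w: "w \<noteq> 0"
  shows "qf X w > 0"
proof -
  have e: "qf X w = X$1$1*(w$1*w$1) + X$1$2*(w$1*w$2) + X$1$3*(w$1*w$3) + X$2$1*(w$2*w$1) + X$2$2*(w$2*w$2)
     + X$2$3*(w$2*w$3) + X$3$1*(w$3*w$1) + X$3$2*(w$3*w$2) + X$3$3*(w$3*w$3)"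
    by (simp add: qf_def CS del: transpose_matrix_vector) (simp add: algebra_simps)
  have m: "(mat 1 :: real^3^3)$i$j = (if i = j then 1 else 0)" for i j by (simp add: mat_def)
  have b: "X$i$j * (w$i*w$j) \<ge> (if i = j then 1 else 0)*(w$i*w$j) - (w$i*w$i + w$j*w$j)/18" for i j
    using bnd1[of "X$i$j" "if i = j then 1 else 0" "w$i" "w$j"] h m by auto
  have pos: "w$1*w$1 + w$2*w$2 + w$3*w$3 > 0"
  proof -
    have "w$1 \<noteq> 0 \<or> w$2 \<noteq> 0 \<or> w$3 \<noteq> 0" using w by (auto simp: vec_eq_iff forall_3)
    moreover have "w$i*w$i \<ge> 0" for i by simp
    moreover have "w$i \<noteq> 0 \<Longrightarrow> w$i*w$i > 0" for i by (metis not_real_square_gt_zero)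
    ultimately show ?thesis by (smt (verit))
  qed
  have cm: "w$2*w$1 = w$1*w$2" "w$3*w$1 = w$1*w$3" "w$3*w$2 = w$2*w$3" by (simp_all add: mult.commute)
  show ?thesis unfolding e using b[of 1 1] b[of 1 2] b[of 1 3] b[of 2 1] b[of 2 2] b[of 2 3]
    b[of 3 1] b[of 3 2] b[of 3 3] pos
    apply (simp add: cm)
    by (rule lin_aux; assumption)
qed

locale ctr =
  fixes N a N0 a0 U
  assumes c: "contracts_via (mk N a) U (mk N0 a0)" and s: "symm N" "symm N0"
begin

lemma mc: "mconv (\<lambda>e. NN (U e) N) N0" using contr_lim[OF c s] by simp
lemma vc: "vconv (\<lambda>e. transpose (U e) *v a) a0" using contr_lim[OF c s] by simp
lemma evi: "\<forall>\<^sub>F e in at_right 0. invertible (U e)" using ev_inv[OF c] .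

lemma inv_a: "a = 0 \<Longrightarrow> a0 = 0"
proof -
  assume a: "a = 0"
  have "a0 $ i = 0" for i
  proof -
    have "((\<lambda>e. (transpose (U e) *v a) $ i) \<longlongrightarrow> a0 $ i) (at_right 0)" by (rule vconvD[OF vc])
    moreover have "((\<lambda>e. (transpose (U e) *v a) $ i) \<longlongrightarrow> 0) (at_right 0)" using a by simp
    ultimately show ?thesis using tendsto_unique[OF trivial_limit_at_right_real] by blast
  qed
  then show "a0 = 0" by (simp add: vec_eq_iff)
qed

lemma inv_N: "N = 0 \<Longrightarrow> N0 = 0"
proof -
  assume a: "N = 0"
  have z: "NN U' 0 = 0" for U' by (simp add: NN_def CS)
  have "N0 $ i $ j = 0" for i j
  proof -
    have "((\<lambda>e. NN (U e) N $ i $ j) \<longlongrightarrow> N0 $ i $ j) (at_right 0)" by (rule mconvD[OF mc])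
    moreover have "((\<lambda>e. NN (U e) N $ i $ j) \<longlongrightarrow> 0) (at_right 0)" using a z by simp
    ultimately show ?thesis using tendsto_unique[OF trivial_limit_at_right_real] by blast
  qed
  then show "N0 = 0" by (simp add: vec_eq_iff)
qed


lemma inv_adj: "adj3 N = c *\<^sub>R outer a \<Longrightarrow> adj3 N0 = c *\<^sub>R outer a0"
proof -
  assume h: "adj3 N = c *\<^sub>R outer a"
  have sc: "transpose V ** (c *\<^sub>R X) ** V = c *\<^sub>R (transpose V ** X ** V)" for V X :: "real^3^3"
    by (simp add: CS) (auto simp: algebra_simps sum_distrib_left)
  have "adj3 N0 $ i $ j = (c *\<^sub>R outer a0) $ i $ j" for i j
  proof -
    have t1: "((\<lambda>e. adj3 (NN (U e) N) $ i $ j) \<longlongrightarrow> adj3 N0 $ i $ j) (at_right 0)"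
      by (rule mconvD[OF adj_tendsto[OF mc]])
    have t2: "((\<lambda>e. c * outer (transpose (U e) *v a) $ i $ j) \<longlongrightarrow> c * outer a0 $ i $ j) (at_right 0)"
      by (intro tendsto_mult tendsto_const mconvD[OF outer_tendsto[OF vc]])
    have ev: "\<forall>\<^sub>F e in at_right 0. adj3 (NN (U e) N) $ i $ j = c * outer (transpose (U e) *v a) $ i $ j"
      using evi by (rule eventually_mono)
         (simp del: transpose_matrix_vector add: adj_NN h sc outer_trans)
    show ?thesis using lim_eq[OF t1 t2 ev] by simp
  qed
  then show ?thesis by (simp add: vec_eq_iff)
qed


lemma inv_det: "det N = 0 \<Longrightarrow> det N0 = 0"
proof -
  assume h: "det N = 0"
  have t1: "((\<lambda>e. det (NN (U e) N)) \<longlongrightarrow> det N0) (at_right 0)" by (rule det_tendsto[OF mc])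
  have ev: "\<forall>\<^sub>F e in at_right 0. det (NN (U e) N) = 0"
    using evi by (rule eventually_mono) (simp add: det_NN h)
  show ?thesis using lim_eq[OF t1 tendsto_const ev] .
qed

lemma qfNN: "invertible V \<Longrightarrow> qf (NN V N) v = det V * qf N (transpose (matrix_inv V) *v v)"
  unfolding NN_def by (rule qf_conj)


lemma inv_semi: "psd N \<or> nsd N \<Longrightarrow> psd N0 \<or> nsd N0"
proof (rule ccontr)
  assume h: "psd N \<or> nsd N" and n: "\<not> (psd N0 \<or> nsd N0)"
  from n have "\<not> psd N0" by blast
  then obtain v where v: "qf N0 v < 0" unfolding psd_def by (auto simp: not_le)
  from n have "\<not> nsd N0" by blast
  then obtain w where w: "qf N0 w > 0" unfolding nsd_def by (auto simp: not_le)
  have ev1: "\<forall>\<^sub>F e in at_right 0. qf (NN (U e) N) v < 0" using order_tendstoD(2)[OF qf_tendsto[OF mc] v] .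
  have ev2: "\<forall>\<^sub>F e in at_right 0. qf (NN (U e) N) w > 0" using order_tendstoD(1)[OF qf_tendsto[OF mc] w] .
  have "\<forall>\<^sub>F e in at_right (0::real). False"
    using eventually_conj[OF evi eventually_conj[OF ev1 ev2]]
  proof (rule eventually_mono)
    fix e assume H: "invertible (U e) \<and> qf (NN (U e) N) v < 0 \<and> 0 < qf (NN (U e) N) w"
    then have i: "invertible (U e)" by blast
    have a1: "det (U e) * qf N (transpose (matrix_inv (U e)) *v v) < 0" using H qfNN[OF i, of v] by simp
    have a2: "det (U e) * qf N (transpose (matrix_inv (U e)) *v w) > 0" using H qfNN[OF i, of w] by simp
    have "0 \<le> qf N (transpose (matrix_inv (U e)) *v v) \<and> 0 \<le> qf N (transpose (matrix_inv (U e)) *v w) \<or>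
          qf N (transpose (matrix_inv (U e)) *v v) \<le> 0 \<and> qf N (transpose (matrix_inv (U e)) *v w) \<le> 0"
      using h unfolding psd_def nsd_def by blast
    then show False using a1 a2 sign_contra by blast
  qed
  then show False by (simp add: trivial_limit_at_right_real)
qed

lemma inv_adjnsd: "nsd (adj3 N) \<Longrightarrow> nsd (adj3 N0)"
  unfolding nsd_def
proof (intro allI)
  fix v assume h: "\<forall>v. qf (adj3 N) v \<le> 0"
  have t: "((\<lambda>e. qf (adj3 (NN (U e) N)) v) \<longlongrightarrow> qf (adj3 N0) v) (at_right 0)"
    by (rule qf_tendsto[OF adj_tendsto[OF mc]])
  have "\<forall>\<^sub>F e in at_right 0. qf (adj3 (NN (U e) N)) v \<le> 0"
    using evi by (rule eventually_mono) (simp add: adj_NN qf_tconj h)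
  then show "qf (adj3 N0) v \<le> 0" using tendsto_upperbound[OF t _ trivial_limit_at_right_real] by blast
qed

lemma inv_iso: assumes q: "qf N v = 0" and v: "v \<noteq> 0" shows "N0 \<noteq> mat 1"
proof
  assume N0: "N0 = mat 1"
  have "\<forall>\<^sub>F e in at_right 0. \<bar>NN (U e) N $ i $ j - (mat 1::real^3^3) $ i $ j\<bar> < 1/9" for i j
    using tendstoD[OF mconvD[OF mc, of i j], of "1/9"] N0 by (simp add: dist_real_def)
  then have ev: "\<forall>\<^sub>F e in at_right 0. \<forall>i j. \<bar>NN (U e) N $ i $ j - (mat 1::real^3^3) $ i $ j\<bar> < 1/9"
    by (intro eventually_all_finite) simp_all
  have "\<forall>\<^sub>F e in at_right (0::real). False"
    using eventually_conj[OF evi ev]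
  proof (rule eventually_mono)
    fix e assume H: "invertible (U e) \<and> (\<forall>i j. \<bar>NN (U e) N $ i $ j - (mat 1::real^3^3) $ i $ j\<bar> < 1/9)"
    then have i: "invertible (U e)" by blast
    let ?w = "transpose (U e) *v v"
    have MU: "transpose (matrix_inv (U e)) ** transpose (U e) = mat 1"
      using inv_ok(1)[OF i] by (metis matrix_transpose_mul transpose_mat)
    have bk: "transpose (matrix_inv (U e)) *v ?w = v"
      by (simp only: matrix_vector_mul_assoc MU matrix_vector_mul_lid)
    have wn: "?w \<noteq> 0"
    proof
      assume "?w = 0"
      then have "transpose (matrix_inv (U e)) *v ?w = 0" by simp
      then show False using bk v by simp
    qed
    have "qf (NN (U e) N) ?w = 0" using qfNN[OF i, of ?w] bk q by simp
    moreover have "qf (NN (U e) N) ?w > 0" using pos_near_id[OF _ wn] H by blast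
    ultimately show False by simp
  qed
  then show False by (simp add: trivial_limit_at_right_real)
qed

end

definition diag3 :: "real \<Rightarrow> real \<Rightarrow> real \<Rightarrow> real^3^3" where
  "diag3 p q r = (\<chi> i j. if i = j then (vector [p,q,r] :: real^3) $ i else 0)"

lemma diag3_nth [simp]: "diag3 p q r $ 1 $ 1 = p" "diag3 p q r $ 2 $ 2 = q" "diag3 p q r $ 3 $ 3 = r"
  "diag3 p q r $ 1 $ 2 = 0" "diag3 p q r $ 1 $ 3 = 0" "diag3 p q r $ 2 $ 1 = 0"
  "diag3 p q r $ 2 $ 3 = 0" "diag3 p q r $ 3 $ 1 = 0" "diag3 p q r $ 3 $ 2 = 0"
  by (simp_all add: diag3_def)

lemma diag3_eq [simp]: "diag3 p q r = diag3 p' q' r' \<longleftrightarrow> p = p' \<and> q = q' \<and> r = r'"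
  by (auto simp: vec_eq_iff forall_3 diag3_def)

lemma diag3_zero [simp]: "diag3 p q r = 0 \<longleftrightarrow> p = 0 \<and> q = 0 \<and> r = 0"
  by (auto simp: vec_eq_iff forall_3 diag3_def)

lemma symm_diag3 [simp]: "symm (diag3 p q r)"
  by (auto simp: symm_def diag3_def)

lemma adj_diag3 [simp]: "adj3 (diag3 p q r) = diag3 (q*r) (p*r) (p*q)"
  by (simp add: adj3_def vec_eq_iff forall_3)

lemma det_diag3 [simp]: "det (diag3 p q r) = p*q*r"
  by (simp add: det_3)

lemma outer_e3 [simp]: "outer (vector [0,0,k]) = diag3 0 0 (k*k)"
  by (simp add: outer_def vec_eq_iff forall_3)

lemma scale_diag3 [simp]: "c *\<^sub>R diag3 p q r = diag3 (c*p) (c*q) (c*r)"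
  by (simp add: vec_eq_iff forall_3)

lemma vec3_zero [simp]: "(vector [p,q,r] :: real^3) = 0 \<longleftrightarrow> p = 0 \<and> q = 0 \<and> r = 0"
  by (auto simp: vec_eq_iff forall_3)

lemma mat1_diag3: "(mat 1 :: real^3^3) = diag3 1 1 1"
  by (simp add: vec_eq_iff forall_3 mat_def)

lemma qf_diag3: "qf (diag3 p q r) v = p*(v$1 * v$1) + q*(v$2 * v$2) + r*(v$3 * v$3)"
  by (simp add: qf_def CS del: transpose_matrix_vector)

lemma psd_diag3 [simp]: "psd (diag3 p q r) \<longleftrightarrow> p \<ge> 0 \<and> q \<ge> 0 \<and> r \<ge> 0"
proof
  assume "psd (diag3 p q r)"
  then have "qf (diag3 p q r) (vector[1,0,0]) \<ge> 0" "qf (diag3 p q r) (vector[0,1,0]) \<ge> 0"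
    "qf (diag3 p q r) (vector[0,0,1]) \<ge> 0" unfolding psd_def by auto
  then show "p \<ge> 0 \<and> q \<ge> 0 \<and> r \<ge> 0" by (simp add: qf_diag3)
next
  assume "p \<ge> 0 \<and> q \<ge> 0 \<and> r \<ge> 0"
  then show "psd (diag3 p q r)" unfolding psd_def qf_diag3 by (auto intro!: add_nonneg_nonneg)
qed

lemma nsd_diag3 [simp]: "nsd (diag3 p q r) \<longleftrightarrow> p \<le> 0 \<and> q \<le> 0 \<and> r \<le> 0"
proof
  assume "nsd (diag3 p q r)"
  then have "qf (diag3 p q r) (vector[1,0,0]) \<le> 0" "qf (diag3 p q r) (vector[0,1,0]) \<le> 0"
    "qf (diag3 p q r) (vector[0,0,1]) \<le> 0" unfolding nsd_def by auto
  then show "p \<le> 0 \<and> q \<le> 0 \<and> r \<le> 0" by (simp add: qf_diag3)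
next
  assume "p \<le> 0 \<and> q \<le> 0 \<and> r \<le> 0"
  then show "nsd (diag3 p q r)" unfolding nsd_def qf_diag3
    by (auto intro!: add_nonpos_nonpos simp: mult_nonpos_nonneg)
qed

datatype nf = Z | H | Eu | Ep | SO | SL | A3 | J | B real

fun nfN :: "nf \<Rightarrow> real^3^3" where
  "nfN Z = diag3 0 0 0" | "nfN H = diag3 1 0 0" | "nfN Eu = diag3 1 1 0" | "nfN Ep = diag3 1 (-1) 0"
| "nfN SO = diag3 1 1 1" | "nfN SL = diag3 1 1 (-1)" | "nfN A3 = diag3 0 0 0" | "nfN J = diag3 1 0 0"
| "nfN (B c) = diag3 1 c 0"

fun nfk :: "nf \<Rightarrow> real" where
  "nfk A3 = 1" | "nfk J = 1" | "nfk (B c) = 1" | "nfk _ = 0"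

definition nfa :: "nf \<Rightarrow> real^3" where "nfa k = vector [0,0,nfk k]"

fun valid :: "nf \<Rightarrow> bool" where "valid (B c) = (c \<noteq> 0)" | "valid _ = True"

fun cc :: "nf \<Rightarrow> real" where "cc (B c) = c" | "cc _ = 0"

definition mkk :: "nf \<Rightarrow> bracket" where "mkk k = mk (nfN k) (nfa k)"

lemma symm_nfN [simp]: "symm (nfN k)" by (cases k) simp_all

lemma deg: assumes v: "valid k1" "valid k2" and c: "contracts_via (mkk k1) U (mkk k2)"
  shows "k2 = k1 \<or> k2 = Z \<or> (k2 = H \<and> k1 \<noteq> Z \<and> k1 \<noteq> A3) \<or> (k1 = SO \<and> k2 = Eu) \<or>
    (k1 = SL \<and> k2 = Eu) \<or> (k1 = SL \<and> k2 = Ep) \<or> (k1 = J \<and> k2 = A3)"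
proof -
  interpret ctr "nfN k1" "nfa k1" "nfN k2" "nfa k2" U
    using c by unfold_locales (simp_all add: mkk_def)
  have f1: "nfa k1 = 0 \<longrightarrow> nfa k2 = 0" using inv_a by blast
  have f2: "nfN k1 = 0 \<longrightarrow> nfN k2 = 0" using inv_N by blast
  have f3: "adj3 (nfN k1) = cc k1 *\<^sub>R outer (nfa k1) \<longrightarrow> adj3 (nfN k2) = cc k1 *\<^sub>R outer (nfa k2)"
    using inv_adj by blast
  have f4: "det (nfN k1) = 0 \<longrightarrow> det (nfN k2) = 0" using inv_det by blast
  have f5: "psd (nfN k1) \<or> nsd (nfN k1) \<longrightarrow> psd (nfN k2) \<or> nsd (nfN k2)" using inv_semi by blast
  have f6: "nsd (adj3 (nfN k1)) \<longrightarrow> nsd (adj3 (nfN k2))" using inv_adjnsd by blast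
  have f7: "qf (nfN k1) (vector [1,0,1]) = 0 \<longrightarrow> nfN k2 \<noteq> diag3 1 1 1"
    using inv_iso[of "vector [1,0,1]"] by (simp add: mat1_diag3)
  show ?thesis using v f1 f2 f3 f4 f5 f6 f7
    by (cases k1; cases k2) (simp_all add: nfa_def qf_diag3)
qed

lemma nf_unique: assumes v: "valid k1" "valid k2" and i: "lie_iso (mkk k1) (mkk k2)" shows "k1 = k2"
proof -
  obtain A where c1: "contracts_via (mkk k2) (\<lambda>_. A) (mkk k1)" using iso_contr[OF i] by blast
  obtain B where c2: "contracts_via (mkk k1) (\<lambda>_. B) (mkk k2)" using iso_contr[OF lie_iso_sym[OF i]] by blast
  show ?thesis using deg[OF v(2) v(1) c1] deg[OF v(1) v(2) c2] by auto
qed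

lemma so3_mkk: "so3_br = mkk SO"
  by (intro ext) (simp add: so3_br_def mkk_def mk_def nfa_def CS)

lemma h3_mkk: "h3_br = mkk H"
  by (intro ext) (simp add: h3_br_def mkk_def mk_def nfa_def CS)

definition dinv :: "real \<Rightarrow> (3 \<Rightarrow> nat) \<Rightarrow> real^3^3" where
  "dinv e \<alpha> = (\<chi> i j. if i = j then (1/e) ^ \<alpha> i else 0)"

definition ssum :: "(3 \<Rightarrow> nat) \<Rightarrow> nat" where "ssum \<alpha> = \<alpha> 1 + \<alpha> 2 + \<alpha> 3"

lemma diag_dinv: "e \<noteq> 0 \<Longrightarrow> diag_pow e \<alpha> ** dinv e \<alpha> = mat 1"
  by (simp add: diag_pow_def dinv_def CS power_one_over[symmetric] power_mult_distrib[symmetric])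

lemma det_diag_pow: "det (diag_pow e \<alpha>) = e ^ ssum \<alpha>"
  by (simp add: diag_pow_def det_3 ssum_def power_add)

lemma diag_conj: fixes d :: "3 \<Rightarrow> real"
  shows "((\<chi> i j. if i = j then d i else 0) ** X ** transpose (\<chi> i j. if i = j then d i else 0)) $ i $ j
     = d i * X $ i $ j * d j"
  using exhaust_3[of i] exhaust_3[of j] by (auto simp: CS)

lemma diag_mv: fixes d :: "3 \<Rightarrow> real"
  shows "(transpose (\<chi> i j. if i = j then d i else 0) *v x) $ i = d i * x $ i"
  using exhaust_3[of i] by (auto simp: CS)

lemma pow_lim: assumes "p + q \<le> s \<or> c = 0"
  shows "((\<lambda>e::real. e^s * (1/e)^p * (1/e)^q * c) \<longlongrightarrow> (if p + q = s then c else 0)) (at_right 0)"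
proof (cases "c = 0")
  case True then show ?thesis by simp
next
  case False
  then have le: "p + q \<le> s" using assms by simp
  have ev: "\<forall>\<^sub>F e in at_right (0::real). e^s * (1/e)^p * (1/e)^q * c = e^(s - p - q) * c"
    using ev01
  proof (rule eventually_mono)
    fix e :: real assume "e \<in> {0<..1}"
    then have e: "e > 0" by simp
    have "e^s = e^(s-p-q) * e^p * e^q" using le by (simp add: power_add[symmetric])
    then show "e^s * (1/e)^p * (1/e)^q * c = e^(s - p - q) * c" using e
      by (simp add: power_one_over field_simps)
  qed
  have "((\<lambda>e::real. e^(s - p - q) * c) \<longlongrightarrow> (if p + q = s then c else 0)) (at_right 0)"
  proof (cases "p + q = s")
    case True then show ?thesis by simp
  next
    case F: False
    have "((\<lambda>e::real. e^(s - p - q) * c) \<longlongrightarrow> 0^(s-p-q) * c) (at_right 0)"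
      by (intro tendsto_intros)
    moreover have "(0::real)^(s-p-q) = 0" using F le by simp
    ultimately show ?thesis using F le by (simp add: power_0_left)
  qed
  then show ?thesis using tendsto_cong[OF ev] by simp
qed

lemma pow_lim_conv: assumes t: "((\<lambda>e::real. e^s * (1/e)^p * (1/e)^q * c) \<longlongrightarrow> L) (at_right 0)"
  shows "(p + q \<le> s \<or> c = 0) \<and> L = (if p + q = s then c else 0)"
proof -
  have A: "p + q \<le> s \<or> c = 0"
  proof (rule ccontr)
    assume "\<not> (p + q \<le> s \<or> c = 0)"
    then have gt: "p + q > s" and c: "c \<noteq> 0" by auto
    have t2: "((\<lambda>e::real. e^(p+q-s) * (e^s * (1/e)^p * (1/e)^q * c)) \<longlongrightarrow> 0^(p+q-s) * L) (at_right 0)"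
      by (intro tendsto_intros t)
    have ev: "\<forall>\<^sub>F e in at_right (0::real). e^(p+q-s) * (e^s * (1/e)^p * (1/e)^q * c) = c"
      using ev01
    proof (rule eventually_mono)
      fix e :: real assume "e \<in> {0<..1}"
      then have e: "e > 0" by simp
      have "e^(p+q-s) * e^s = e^p * e^q" using gt by (simp add: power_add[symmetric])
      then show "e^(p+q-s) * (e^s * (1/e)^p * (1/e)^q * c) = c" using e
        by (simp add: power_one_over field_simps)
    qed
    have "(0::real)^(p+q-s) * L = c" using lim_eq[OF t2 tendsto_const ev] .
    then show False using gt c by (simp add: power_0_left)
  qed
  moreover have "L = (if p + q = s then c else 0)"
    using tendsto_unique[OF trivial_limit_at_right_real t pow_lim[OF A]] .
  ultimately show ?thesis by blast
qed

lemma mk_tendsto: assumes X: "mconv X X0" and Y: "vconv Y Y0"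
  shows "((\<lambda>e. mk (X e) (Y e) x y) \<longlongrightarrow> mk X0 Y0 x y) (at_right 0)"
proof (rule vec_tendstoI)
  fix i
  show "((\<lambda>e. mk (X e) (Y e) x y $ i) \<longlongrightarrow> mk X0 Y0 x y $ i) (at_right 0)"
    unfolding mk_def
    by (simp add: matrix_vector_mult_def sum_3 inner_vec_def inner_real_def)
       (intro TI mconvD[OF X] vconvD[OF Y])
qed

lemma cont_diag_pow: "continuous_on S (\<lambda>e. diag_pow e \<alpha>)"
  unfolding diag_pow_def
  apply (intro continuous_on_vec_lambda)
  subgoal for i j by (cases "i = j") (auto intro!: continuous_intros)
  done

lemma pow_lim1: "((\<lambda>e::real. e ^ k * c) \<longlongrightarrow> (if k = 0 then c else 0)) (at_right 0)"
proof -
  have "((\<lambda>e::real. e ^ k * c) \<longlongrightarrow> 0 ^ k * c) (at_right 0)" by (intro tendsto_intros)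
  then show ?thesis by (simp add: power_0_left split: if_splits)
qed

lemma iw:
  fixes P M N :: "real^3^3" and a :: "real^3" and \<alpha> :: "3 \<Rightarrow> nat"
  assumes PM: "P ** M = mat 1" and sN: "symm N"
  and cond: "\<And>i j. \<alpha> i + \<alpha> j \<le> ssum \<alpha> \<or> (det P *\<^sub>R (M ** N ** transpose M)) $ i $ j = 0"
  shows "contracts_via (mk N a) (\<lambda>e. P ** diag_pow e \<alpha> ** mat 1)
    (mk (\<chi> i j. if \<alpha> i + \<alpha> j = ssum \<alpha> then (det P *\<^sub>R (M ** N ** transpose M)) $ i $ j else 0)
        (\<chi> i. if \<alpha> i = 0 then (transpose P *v a) $ i else 0))"
  (is "contracts_via _ ?U (mk ?N0 ?a0)")
proof -
  let ?N1 = "det P *\<^sub>R (M ** N ** transpose M)"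
  let ?Mi = "\<lambda>e. dinv e \<alpha> ** M"
  have UM: "?U e ** ?Mi e = mat 1" if "e \<noteq> 0" for e
  proof -
    have "?U e ** ?Mi e = P ** (diag_pow e \<alpha> ** dinv e \<alpha>) ** M" by (simp add: matrix_mul_assoc)
    also have "\<dots> = mat 1" using diag_dinv[OF that] PM by simp
    finally show ?thesis .
  qed
  have cont: "continuous_on {0<..1} ?U"
    by (intro cont_mmult continuous_on_const cont_diag_pow)
  have inv: "invertible (?U e)" if "e \<in> {0<..1}" for e
    using UM[of e] that invertible_right_inverse by fastforce
  define NNe where "NNe e = det (?U e) *\<^sub>R (?Mi e ** N ** transpose (?Mi e))" for e
  define ae where "ae e = transpose (?U e) *v a" for e
  have dU: "det (?U e) = det P * e ^ ssum \<alpha>" for e by (simp add: det_mul det_diag_pow)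
  have NNe_ent: "NNe e $ i $ j = e ^ ssum \<alpha> * (1/e) ^ \<alpha> i * (1/e) ^ \<alpha> j * ?N1 $ i $ j" for e i j
  proof -
    have "?Mi e ** N ** transpose (?Mi e) = dinv e \<alpha> ** (M ** N ** transpose M) ** transpose (dinv e \<alpha>)"
      by (simp add: matrix_transpose_mul matrix_mul_assoc)
    then show ?thesis unfolding NNe_def dU dinv_def using diag_conj[of "\<lambda>i. (1/e) ^ \<alpha> i"]
      by (simp add: algebra_simps)
  qed
  have ae_ent: "ae e $ i = e ^ \<alpha> i * (transpose P *v a) $ i" for e i
  proof -
    have "ae e = transpose (diag_pow e \<alpha>) *v (transpose P *v a)"
      unfolding ae_def by (simp add: matrix_transpose_mul matrix_vector_mul_assoc del: transpose_matrix_vector)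
    then show ?thesis unfolding diag_pow_def using diag_mv[of "\<lambda>i. e ^ \<alpha> i"] by simp
  qed
  have mN: "mconv NNe ?N0" unfolding mconv_def
  proof (intro allI)
    fix i j
    show "((\<lambda>e. NNe e $ i $ j) \<longlongrightarrow> ?N0 $ i $ j) (at_right 0)"
      unfolding NNe_ent using pow_lim[OF cond[of i j]] by simp
  qed
  have va: "vconv ae ?a0" unfolding vconv_def
  proof (intro allI)
    fix i
    show "((\<lambda>e. ae e $ i) \<longlongrightarrow> ?a0 $ i) (at_right 0)"
      unfolding ae_ent using pow_lim1[of "\<alpha> i" "(transpose P *v a) $ i"] by simp
  qed
  show ?thesis unfolding contracts_via_def
  proof (intro conjI ballI allI cont inv)
    fix x y
    have ev: "\<forall>\<^sub>F e in at_right 0. act (?U e) (mk N a) x y = mk (NNe e) (ae e) x y"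
      using ev01
    proof (rule eventually_mono)
      fix e :: real assume "e \<in> {0<..1}"
      then have "e \<noteq> 0" by simp
      then have "act (?U e) (mk N a) = mk (NNe e) (ae e)"
        unfolding NNe_def ae_def by (rule act_mk[OF UM])
      then show "act (?U e) (mk N a) x y = mk (NNe e) (ae e) x y" by simp
    qed
    have "((\<lambda>e. act (?U e) (mk N a) x y) \<longlongrightarrow> mk ?N0 ?a0 x y) (at_right 0)"
      using tendsto_cong[OF ev] mk_tendsto[OF mN va] by simp
    then show "((\<lambda>e. matrix_inv (?U e) *v mk N a (?U e *v x) (?U e *v y)) \<longlongrightarrow> mk ?N0 ?a0 x y) (at_right 0)"
      unfolding act_def .
  qed
qed

lemma iw_eq:
  fixes P M N :: "real^3^3" and a :: "real^3" and \<alpha> :: "3 \<Rightarrow> nat"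
  assumes "P ** M = mat 1" and "symm N"
  and "\<And>i j. \<alpha> i + \<alpha> j \<le> ssum \<alpha> \<or> (det P *\<^sub>R (M ** N ** transpose M)) $ i $ j = 0"
  and "(\<chi> i j. if \<alpha> i + \<alpha> j = ssum \<alpha> then (det P *\<^sub>R (M ** N ** transpose M)) $ i $ j else 0) = N0"
  and "(\<chi> i. if \<alpha> i = 0 then (transpose P *v a) $ i else 0) = a0"
  shows "contracts_via (mk N a) (\<lambda>e. P ** diag_pow e \<alpha> ** mat 1) (mk N0 a0)"
proof -
  have "contracts_via (mk N a) (\<lambda>e. P ** diag_pow e \<alpha> ** mat 1)
    (mk (\<chi> i j. if \<alpha> i + \<alpha> j = ssum \<alpha> then (det P *\<^sub>R (M ** N ** transpose M)) $ i $ j else 0)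
        (\<chi> i. if \<alpha> i = 0 then (transpose P *v a) $ i else 0))"
    by (rule iw[OF assms(1,2,3)])
  then show ?thesis by (simp only: assms(4,5))
qed

lemma inv_mat1: "invertible (mat 1 :: real^3^3)"
  unfolding invertible_def by (rule exI[of _ "mat 1"]) simp

lemmas NS = vec_eq_iff forall_3 ssum_def CS mkk_def nfa_def diag3_def symm_def

lemma iw_triv: "contracts_via (mkk k) (\<lambda>e. mat 1 ** diag_pow e (\<lambda>_. 0) ** mat 1) (mkk k)"
  unfolding mkk_def by (cases k; rule iw_eq[where M = "mat 1"]) (simp_all add: NS)

lemma iw_Z: "contracts_via (mkk k) (\<lambda>e. mat 1 ** diag_pow e (\<lambda>_. 1) ** mat 1) (mkk Z)"
  unfolding mkk_def by (cases k; rule iw_eq[where M = "mat 1"]) (simp_all add: NS)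

lemma iw_SO_E2: "contracts_via (mkk SO) (\<lambda>e. mat 1 ** diag_pow e (\<lambda>i. if i = 3 then 0 else 1) ** mat 1) (mkk Eu)"
  unfolding mkk_def by (rule iw_eq[where M = "mat 1"]) (simp_all add: NS)

lemma iw_SL_E2: "contracts_via (mkk SL) (\<lambda>e. mat 1 ** diag_pow e (\<lambda>i. if i = 3 then 0 else 1) ** mat 1) (mkk Eu)"
  unfolding mkk_def by (rule iw_eq[where M = "mat 1"]) (simp_all add: NS)

definition P11 :: "real^3^3" where "P11 = vector [vector [1,0,0], vector [0,0,1], vector [0,-1,0]]"
definition M11 :: "real^3^3" where "M11 = vector [vector [1,0,0], vector [0,0,-1], vector [0,1,0]]"

lemma iw_SL_E11: "contracts_via (mkk SL) (\<lambda>e. P11 ** diag_pow e (\<lambda>i. if i = 3 then 0 else 1) ** mat 1) (mkk Ep)"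
  unfolding mkk_def by (rule iw_eq[where M = M11]) (simp_all add: NS P11_def M11_def)

lemma iw_J_A3: "contracts_via (mkk J) (\<lambda>e. mat 1 ** diag_pow e (\<lambda>i. if i = 2 then 1 else 0) ** mat 1) (mkk A3)"
  unfolding mkk_def by (rule iw_eq[where M = "mat 1"]) (simp_all add: NS)

lemma iw_H_E2: "contracts_via (mkk Eu) (\<lambda>e. mat 1 ** diag_pow e (\<lambda>i. if i = 2 then 0 else 1) ** mat 1) (mkk H)"
  unfolding mkk_def by (rule iw_eq[where M = "mat 1"]) (simp_all add: NS)
lemma iw_H_E11: "contracts_via (mkk Ep) (\<lambda>e. mat 1 ** diag_pow e (\<lambda>i. if i = 2 then 0 else 1) ** mat 1) (mkk H)"
  unfolding mkk_def by (rule iw_eq[where M = "mat 1"]) (simp_all add: NS)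
lemma iw_H_J: "contracts_via (mkk J) (\<lambda>e. mat 1 ** diag_pow e (\<lambda>i. if i = 2 then 0 else 1) ** mat 1) (mkk H)"
  unfolding mkk_def by (rule iw_eq[where M = "mat 1"]) (simp_all add: NS)
lemma iw_H_B: "contracts_via (mkk (B c)) (\<lambda>e. mat 1 ** diag_pow e (\<lambda>i. if i = 2 then 0 else 1) ** mat 1) (mkk H)"
  unfolding mkk_def by (rule iw_eq[where M = "mat 1"]) (simp_all add: NS)

definition PH :: "real^3^3" where "PH = vector [vector [1,0,0], vector [0,1,0], vector [0,-1,1]]"
definition MH :: "real^3^3" where "MH = vector [vector [1,0,0], vector [0,1,0], vector [0,1,1]]"

lemma iw_SL_H: "contracts_via (mkk SL) (\<lambda>e. PH ** diag_pow e (\<lambda>i. if i = 2 then 0 else 1) ** mat 1) (mkk H)"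
  unfolding mkk_def by (rule iw_eq[where M = MH]) (simp_all add: NS PH_def MH_def)

lemma iw_SO_H: "contracts_via (mkk SO) (\<lambda>e. mat 1 ** diag_pow e (\<lambda>i. if i = 1 then 2 else 1) ** mat 1) (mkk H)"
  unfolding mkk_def by (rule iw_eq[where M = "mat 1"]) (simp_all add: NS)

lemma inv_P11: "invertible P11"
  unfolding invertible_right_inverse by (rule exI[of _ M11]) (simp add: CS P11_def M11_def)

lemma inv_PH: "invertible PH"
  unfolding invertible_right_inverse by (rule exI[of _ MH]) (simp add: CS PH_def MH_def)

lemma nne_ent:
  fixes P M N :: "real^3^3"
  shows "(det (P ** diag_pow e \<alpha> ** mat 1) *\<^sub>R ((dinv e \<alpha> ** M) ** N ** transpose (dinv e \<alpha> ** M))) $ i $ j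
     = e ^ ssum \<alpha> * (1/e) ^ \<alpha> i * (1/e) ^ \<alpha> j * (det P *\<^sub>R (M ** N ** transpose M)) $ i $ j"
proof -
  have dU: "det (P ** diag_pow e \<alpha> ** mat 1) = det P * e ^ ssum \<alpha>" by (simp add: det_mul det_diag_pow)
  have "(dinv e \<alpha> ** M) ** N ** transpose (dinv e \<alpha> ** M) = dinv e \<alpha> ** (M ** N ** transpose M) ** transpose (dinv e \<alpha>)"
    by (simp add: matrix_transpose_mul matrix_mul_assoc)
  then show ?thesis unfolding dU dinv_def using diag_conj[of "\<lambda>i. (1/e) ^ \<alpha> i"]
    by (simp add: algebra_simps)
qed

lemma part3_core:
  fixes N1 N0 :: "real^3^3" and \<alpha> :: "3 \<Rightarrow> nat"
  assumes a01: "\<forall>i. \<alpha> i \<in> {0,1}" and cd: "\<forall>i. \<alpha> i + \<alpha> i \<le> ssum \<alpha> \<or> N1$i$i = 0"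
    and nz: "\<forall>i. N1$i$i \<noteq> 0" and adjnz: "\<forall>k. adj3 N1 $ k $ k \<noteq> 0"
    and adj0: "\<forall>k. adj3 N0 $ k $ k = 0" and n0: "N0 \<noteq> 0"
    and N0: "N0 = (\<chi> i j. if \<alpha> i + \<alpha> j = ssum \<alpha> then N1$i$j else 0)"
  shows False
proof -
  have c1: "\<alpha> 1 = 0 \<or> \<alpha> 1 = 1" and c2: "\<alpha> 2 = 0 \<or> \<alpha> 2 = 1" and c3: "\<alpha> 3 = 0 \<or> \<alpha> 3 = 1"
    using a01 by auto
  have d: "\<alpha> i + \<alpha> i \<le> ssum \<alpha>" for i using cd nz by blast
  have a1: "adj3 N1 $ 1 $ 1 \<noteq> 0" "adj3 N1 $ 2 $ 2 \<noteq> 0" "adj3 N1 $ 3 $ 3 \<noteq> 0" using adjnz by auto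
  have z1: "adj3 N0 $ 1 $ 1 = 0" "adj3 N0 $ 2 $ 2 = 0" "adj3 N0 $ 3 $ 3 = 0" using adj0 by auto
  show False
    using c1 c2 c3 d[of 1] d[of 2] d[of 3] a1 z1 n0 unfolding N0
    by (elim disjE) (simp_all add: ssum_def adj3_def vec_eq_iff forall_3)
qed

lemma col_nz: assumes "invertible (P::real^3^3)" shows "P$1$k \<noteq> 0 \<or> P$2$k \<noteq> 0 \<or> P$3$k \<noteq> 0"
proof (rule ccontr)
  assume "\<not> ?thesis"
  then have z: "P$1$k = 0" "P$2$k = 0" "P$3$k = 0" by auto
  have "det P = 0" using exhaust_3[of k] z by (auto simp: det_3)
  then show False using assms invertible_det_nz by blast
qed

lemma row_nz: assumes "invertible (P::real^3^3)" shows "P$k$1 \<noteq> 0 \<or> P$k$2 \<noteq> 0 \<or> P$k$3 \<noteq> 0"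
proof (rule ccontr)
  assume "\<not> ?thesis"
  then have z: "P$k$1 = 0" "P$k$2 = 0" "P$k$3 = 0" by auto
  have "det P = 0" using exhaust_3[of k] z by (auto simp: det_3)
  then show False using assms invertible_det_nz by blast
qed

lemma sq3_nz: "a \<noteq> 0 \<or> b \<noteq> 0 \<or> c \<noteq> 0 \<Longrightarrow> (a::real)*a + b*b + c*c \<noteq> 0"
proof -
  assume h: "a \<noteq> 0 \<or> b \<noteq> 0 \<or> c \<noteq> 0"
  have "a*a \<ge> 0" "b*b \<ge> 0" "c*c \<ge> 0" by simp_all
  moreover have "a*a > 0 \<or> b*b > 0 \<or> c*c > 0" using h by (metis not_real_square_gt_zero)
  ultimately show ?thesis by linarith
qed

lemma adj_mat1: "adj3 (mat 1) = mat 1"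
  by (simp add: adj3_def vec_eq_iff forall_3 mat_def)

lemma part3_nf:
  assumes P: "invertible P" and a01: "\<forall>i. \<alpha> i \<in> {0,1}"
    and c: "contracts_via (mkk SO) (\<lambda>e. P ** diag_pow e \<alpha> ** mat 1) br2"
    and iso: "lie_iso br2 (mkk H)"
  shows False
proof -
  let ?N = "nfN SO" and ?a = "nfa SO"
  let ?U = "\<lambda>e. P ** diag_pow e \<alpha> ** mat 1"
  define M where "M = matrix_inv P"
  have PM: "P ** M = mat 1" using inv_ok[OF P] M_def by simp
  have MP: "M ** P = mat 1" using inv_ok[OF P] M_def by simp
  define N1 where "N1 = det P *\<^sub>R (M ** ?N ** transpose M)"
  have sN1: "symm N1" unfolding N1_def by (rule symm_conj) simp
  have UM: "?U e ** (dinv e \<alpha> ** M) = mat 1" if "e \<noteq> 0" for e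
  proof -
    have "?U e ** (dinv e \<alpha> ** M) = P ** (diag_pow e \<alpha> ** dinv e \<alpha>) ** M" by (simp add: matrix_mul_assoc)
    also have "\<dots> = mat 1" using diag_dinv[OF that] PM by simp
    finally show ?thesis .
  qed
  define NNe where "NNe e = det (?U e) *\<^sub>R ((dinv e \<alpha> ** M) ** ?N ** transpose (dinv e \<alpha> ** M))" for e
  have lim: "((\<lambda>e. act (?U e) (mkk SO) x y) \<longlongrightarrow> br2 x y) (at_right 0)" for x y
    using c unfolding contracts_via_def act_def by auto
  have ev: "\<forall>\<^sub>F e in at_right 0. getN (act (?U e) (mkk SO)) = NNe e"
    using ev01
  proof (rule eventually_mono)
    fix e :: real assume "e \<in> {0<..1}"
    then have "e \<noteq> 0" by simp
    then have "act (?U e) (mkk SO) = mk (NNe e) (transpose (?U e) *v ?a)"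
      unfolding NNe_def mkk_def by (rule act_mk[OF UM])
    moreover have "symm (NNe e)" unfolding NNe_def by (rule symm_conj) simp
    ultimately show "getN (act (?U e) (mkk SO)) = NNe e" by (simp add: getN_mk)
  qed
  have cdl: "(\<alpha> i + \<alpha> j \<le> ssum \<alpha> \<or> N1 $ i $ j = 0) \<and>
      getN br2 $ i $ j = (if \<alpha> i + \<alpha> j = ssum \<alpha> then N1 $ i $ j else 0)" for i j
  proof -
    have t: "((\<lambda>e. getN (act (?U e) (mkk SO)) $ i $ j) \<longlongrightarrow> getN br2 $ i $ j) (at_right 0)"
      by (rule getN_tendsto[OF lim])
    have "\<forall>\<^sub>F e in at_right 0. getN (act (?U e) (mkk SO)) $ i $ j
        = e ^ ssum \<alpha> * (1/e) ^ \<alpha> i * (1/e) ^ \<alpha> j * N1 $ i $ j"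
      using ev
    proof (rule eventually_mono)
      fix e assume h: "getN (act (?U e) (mkk SO)) = NNe e"
      have ne: "NNe e $ i $ j = e ^ ssum \<alpha> * (1/e) ^ \<alpha> i * (1/e) ^ \<alpha> j * N1 $ i $ j"
        unfolding NNe_def N1_def by (rule nne_ent)
      show "getN (act (?U e) (mkk SO)) $ i $ j = e ^ ssum \<alpha> * (1/e) ^ \<alpha> i * (1/e) ^ \<alpha> j * N1 $ i $ j"
        by (simp only: h ne)
    qed
    then have "((\<lambda>e. e ^ ssum \<alpha> * (1/e) ^ \<alpha> i * (1/e) ^ \<alpha> j * N1 $ i $ j) \<longlongrightarrow> getN br2 $ i $ j) (at_right 0)"
      using tendsto_cong t by fastforce
    then show ?thesis by (rule pow_lim_conv)
  qed
  define N0 where "N0 = (\<chi> i j. if \<alpha> i + \<alpha> j = ssum \<alpha> then N1 $ i $ j else 0)"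
  define a0 where "a0 = (\<chi> i. if \<alpha> i = 0 then (transpose P *v ?a) $ i else (0::real))"
  have a00: "a0 = vector [0,0,0]" by (simp add: a0_def nfa_def vec_eq_iff forall_3 CS)
  have c2: "contracts_via (mkk SO) ?U (mk N0 a0)"
    unfolding mkk_def N0_def a0_def N1_def
    by (rule iw[OF PM]) (use cdl in \<open>simp_all add: N1_def\<close>)
  have br2: "br2 = mk N0 a0"
  proof (intro ext)
    fix x y
    have "((\<lambda>e. act (?U e) (mkk SO) x y) \<longlongrightarrow> mk N0 a0 x y) (at_right 0)"
      using c2 unfolding contracts_via_def act_def by auto
    then show "br2 x y = mk N0 a0 x y" using tendsto_unique[OF trivial_limit_at_right_real lim] by blast
  qed
  have sN0: "symm N0" using sN1 unfolding symm_def N0_def by (simp add: add.commute)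
  have adj0: "adj3 N0 = 0"
  proof -
    obtain A where cA: "contracts_via (mkk H) (\<lambda>_. A) (mk N0 a0)"
      using iso_contr[OF iso] br2 by blast
    interpret ctr "nfN H" "nfa H" N0 a0 "\<lambda>_. A" using cA sN0 by unfold_locales (simp_all add: mkk_def)
    have "adj3 (nfN H) = 0 *\<^sub>R outer (nfa H)" by (simp add: nfa_def)
    then have "adj3 N0 = 0 *\<^sub>R outer a0" by (rule inv_adj)
    then show ?thesis by simp
  qed
  have n0: "N0 \<noteq> 0"
  proof
    assume z: "N0 = 0"
    obtain A where cA: "contracts_via (mk N0 a0) (\<lambda>_. A) (mkk H)"
      using iso_contr[OF lie_iso_sym[OF iso]] br2 by blast
    interpret ctr N0 a0 "nfN H" "nfa H" "\<lambda>_. A" using cA sN0 by unfold_locales (simp_all add: mkk_def)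
    have "nfN H = 0" by (rule inv_N[OF z])
    then show False by simp
  qed
  have N1NN: "N1 = NN P ?N" unfolding N1_def NN_def M_def ..
  have adjN1: "adj3 N1 = transpose P ** P"
    unfolding N1NN adj_NN[OF P] by (simp only: nfN.simps mat1_diag3[symmetric] adj_mat1 matrix_mul_rid)
  have adjnz: "adj3 N1 $ k $ k \<noteq> 0" for k
  proof -
    have "adj3 N1 $ k $ k = P$1$k*P$1$k + P$2$k*P$2$k + P$3$k*P$3$k"
      unfolding adjN1 by (simp add: CS)
    then show ?thesis using sq3_nz[OF col_nz[OF P, of k]] by simp
  qed
  have Minv: "invertible M" unfolding invertible_left_inverse using PM by blast
  have nz: "N1 $ i $ i \<noteq> 0" for i
  proof -
    have "N1 = det P *\<^sub>R (M ** transpose M)"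
      unfolding N1_def by (simp only: nfN.simps mat1_diag3[symmetric] matrix_mul_rid)
    then have "N1 $ i $ i = det P * (M$i$1*M$i$1 + M$i$2*M$i$2 + M$i$3*M$i$3)"
      by (simp add: matrix_matrix_mult_def transpose_def sum_3)
    moreover have "det P \<noteq> 0" using P invertible_det_nz by blast
    ultimately show ?thesis using sq3_nz[OF row_nz[OF Minv, of i]] by simp
  qed
  show False
  proof (rule part3_core[OF a01 _ _ _ _ n0 N0_def])
    show "\<forall>i. \<alpha> i + \<alpha> i \<le> ssum \<alpha> \<or> N1 $ i $ i = 0" using cdl by blast
    show "\<forall>i. N1 $ i $ i \<noteq> 0" using nz by blast
    show "\<forall>k. adj3 N1 $ k $ k \<noteq> 0" using adjnz by blast
    show "\<forall>k. adj3 N0 $ k $ k = 0" using adj0 by simp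
  qed
qed

lemma iso_step: assumes M: "invertible M" and a: "transpose M *v a' = a"
  shows "lie_iso (mk N a) (mk ((1 / det M) *\<^sub>R (M ** N ** transpose M)) a')"
proof -
  let ?U = "matrix_inv M"
  have UM: "?U ** M = mat 1" and MU: "M ** ?U = mat 1" using inv_ok[OF M] by auto
  have Ui: "invertible ?U" using invertible_inv[OF M] .
  have dU: "det ?U = 1 / det M"
  proof -
    have "det ?U * det M = 1" using UM by (metis det_I det_mul)
    moreover have "det M \<noteq> 0" using M invertible_det_nz by blast
    ultimately show ?thesis by (simp add: eq_divide_eq)
  qed
  have ta: "transpose ?U *v a = a'"
  proof -
    have "transpose ?U *v a = transpose ?U *v (transpose M *v a')" using a by simp
    also have "\<dots> = transpose (M ** ?U) *v a'"
      by (simp only: matrix_vector_mul_assoc matrix_transpose_mul)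
    also have "\<dots> = a'" using MU by (simp del: transpose_matrix_vector add: transpose_mat)
    finally show ?thesis .
  qed
  have "act ?U (mk N a) = mk (det ?U *\<^sub>R (M ** N ** transpose M)) (transpose ?U *v a)"
    by (rule act_mk[OF UM])
  then have "act ?U (mk N a) = mk ((1 / det M) *\<^sub>R (M ** N ** transpose M)) a'"
    using dU ta by (simp del: transpose_matrix_vector)
  then show ?thesis using lie_iso_actI[OF Ui, of "mk N a"] by simp
qed

lemma iso_scale: assumes t: "t1 \<noteq> 0" "t2 \<noteq> 0" "t3 \<noteq> 0"
  and e: "p' = t1*t1*p/(t1*t2*t3)" "q' = t2*t2*q/(t1*t2*t3)" "r' = t3*t3*r/(t1*t2*t3)" "k' = k/t3"
  shows "lie_iso (mk (diag3 p q r) (vector[0,0,k])) (mk (diag3 p' q' r') (vector[0,0,k']))"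
proof -
  let ?M = "diag3 t1 t2 t3"
  have d: "det ?M = t1*t2*t3" by simp
  have M: "invertible ?M" unfolding invertible_det_nz d using t by simp
  have a: "transpose ?M *v vector[0,0,k'] = vector[0,0,k]" using t e
    by (simp add: vec_eq_iff forall_3 vector_matrix_mult_def sum_3)
  have mm: "?M ** diag3 p q r ** transpose ?M = diag3 (t1*t1*p) (t2*t2*q) (t3*t3*r)"
    by (simp add: vec_eq_iff forall_3 matrix_matrix_mult_def sum_3 transpose_def)
  have "(1 / det ?M) *\<^sub>R (?M ** diag3 p q r ** transpose ?M) = diag3 p' q' r'"
    unfolding mm d scale_diag3 using e by simp
  then show ?thesis using iso_step[OF M a, of "diag3 p q r"] by simp
qed

definition S12 :: "real^3^3" where "S12 = vector [vector [0,1,0], vector [1,0,0], vector [0,0,1]]"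
definition S13 :: "real^3^3" where "S13 = vector [vector [0,0,1], vector [0,1,0], vector [1,0,0]]"
definition S23 :: "real^3^3" where "S23 = vector [vector [1,0,0], vector [0,0,1], vector [0,1,0]]"

lemma inv_S: "invertible S12" "invertible S13" "invertible S23"
  by (simp_all add: invertible_det_nz det_3 S12_def S13_def S23_def)

lemma iso_S12: "lie_iso (mk (diag3 p q r) (vector[0,0,k])) (mk (diag3 (-q) (-p) (-r)) (vector[0,0,k]))"
proof -
  have a: "transpose S12 *v vector[0,0,k] = vector[0,0,k]" by (simp add: CS S12_def)
  have "(1 / det S12) *\<^sub>R (S12 ** diag3 p q r ** transpose S12) = diag3 (-q) (-p) (-r)"
    by (simp add: CS diag3_def S12_def)
  then show ?thesis using iso_step[OF inv_S(1) a, of "diag3 p q r"] by simp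
qed

lemma iso_S13: "lie_iso (mk (diag3 p q r) (vector[0,0,0])) (mk (diag3 (-r) (-q) (-p)) (vector[0,0,0]))"
proof -
  have a: "transpose S13 *v vector[0,0,0] = vector[0,0,0]" by (simp add: CS S13_def)
  have "(1 / det S13) *\<^sub>R (S13 ** diag3 p q r ** transpose S13) = diag3 (-r) (-q) (-p)"
    by (simp add: CS diag3_def S13_def)
  then show ?thesis using iso_step[OF inv_S(2) a, of "diag3 p q r"] by simp
qed

lemma iso_S23: "lie_iso (mk (diag3 p q r) (vector[0,0,0])) (mk (diag3 (-p) (-r) (-q)) (vector[0,0,0]))"
proof -
  have a: "transpose S23 *v vector[0,0,0] = vector[0,0,0]" by (simp add: CS S23_def)
  have "(1 / det S23) *\<^sub>R (S23 ** diag3 p q r ** transpose S23) = diag3 (-p) (-r) (-q)"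
    by (simp add: CS diag3_def S23_def)
  then show ?thesis using iso_step[OF inv_S(3) a, of "diag3 p q r"] by simp
qed

lemma red_B1: assumes "p \<noteq> 0" "k \<noteq> 0"
  shows "lie_iso (mk (diag3 p 0 0) (vector[0,0,k])) (mkk J)"
  unfolding mkk_def nfa_def nfN.simps nfk.simps
  by (rule iso_scale[of 1 "p/k" k]) (use assms in \<open>simp_all\<close>)

lemma red_B2: assumes "p \<noteq> 0" "q \<noteq> 0" "k \<noteq> 0"
  shows "lie_iso (mk (diag3 p q 0) (vector[0,0,k])) (mkk (B (p*q/(k*k))))"
  unfolding mkk_def nfa_def nfN.simps nfk.simps
  by (rule iso_scale[of 1 "p/k" k]) (use assms in \<open>simp_all add: field_simps\<close>)

lemma red_B0: assumes "k \<noteq> 0"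
  shows "lie_iso (mk (diag3 0 0 0) (vector[0,0,k])) (mkk A3)"
  unfolding mkk_def nfa_def nfN.simps nfk.simps
  by (rule iso_scale[of 1 1 k]) (use assms in \<open>simp_all\<close>)

lemma red_B: assumes "k \<noteq> 0"
  shows "\<exists>nf. valid nf \<and> lie_iso (mk (diag3 p q 0) (vector[0,0,k])) (mkk nf)"
proof (cases "p = 0")
  case True
  show ?thesis
  proof (cases "q = 0")
    case True
    then show ?thesis using \<open>p = 0\<close> red_B0[OF assms] by (intro exI[of _ A3]) simp
  next
    case False
    have "lie_iso (mk (diag3 p q 0) (vector[0,0,k])) (mk (diag3 (-q) 0 0) (vector[0,0,k]))"
      using iso_S12[of p q 0 k] \<open>p = 0\<close> by simp
    moreover have "lie_iso (mk (diag3 (-q) 0 0) (vector[0,0,k])) (mkk J)"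
      using red_B1[of "-q" k] False assms by simp
    ultimately show ?thesis by (intro exI[of _ J]) (auto intro: lie_iso_trans)
  qed
next
  case False
  show ?thesis
  proof (cases "q = 0")
    case True
    then show ?thesis using red_B1[OF False assms] by (intro exI[of _ J]) simp
  next
    case q: False
    then show ?thesis using red_B2[OF False q assms] False assms by (intro exI[of _ "B (p*q/(k*k))"]) simp
  qed
qed

lemma red_A1: assumes "p \<noteq> 0"
  shows "lie_iso (mk (diag3 p 0 0) (vector[0,0,0])) (mkk H)"
  unfolding mkk_def nfa_def nfN.simps nfk.simps
  by (rule iso_scale[of 1 1 p]) (use assms in \<open>simp_all\<close>)

lemma red_A2: assumes "p \<noteq> 0" "q \<noteq> 0"
  shows "\<exists>nf. valid nf \<and> lie_iso (mk (diag3 p q 0) (vector[0,0,0])) (mkk nf)"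
proof -
  define \<rho> where "\<rho> = sqrt \<bar>p*q\<bar>"
  have r0: "\<rho> \<noteq> 0" using assms by (simp add: \<rho>_def)
  have rr: "\<rho> * \<rho> = \<bar>p*q\<bar>" by (simp add: \<rho>_def)
  have iso: "lie_iso (mk (diag3 p q 0) (vector[0,0,0])) (mk (diag3 1 (p*q/\<bar>p*q\<bar>) 0) (vector[0,0,0]))"
  proof (rule iso_scale[of 1 "p/\<rho>" \<rho>])
    have "p / \<rho> * (p / \<rho>) * q / (1 * (p / \<rho>) * \<rho>) = p * q / (\<rho> * \<rho>)"
      using assms r0 by (simp add: field_simps)
    then show "p * q / \<bar>p * q\<bar> = p / \<rho> * (p / \<rho>) * q / (1 * (p / \<rho>) * \<rho>)"
      using rr by simp
  qed (use assms r0 in \<open>simp_all\<close>)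
  show ?thesis
  proof (cases "p*q > 0")
    case True
    then have "p*q/\<bar>p*q\<bar> = 1" using assms by simp
    then show ?thesis using iso by (intro exI[of _ Eu]) (simp add: mkk_def nfa_def)
  next
    case False
    then have "p*q < 0" using assms by (simp add: not_less le_less)
    then have "p*q/\<bar>p*q\<bar> = -1" using assms by simp
    then show ?thesis using iso by (intro exI[of _ Ep]) (simp add: mkk_def nfa_def)
  qed
qed

lemma red_flip: "lie_iso (mk (diag3 p q r) (vector[0,0,0])) (mk (diag3 (-p) (-q) (-r)) (vector[0,0,0]))"
  by (rule iso_scale[of "-1" "-1" "-1"]) simp_all

lemma red_A3: assumes "p \<noteq> 0" "q \<noteq> 0" "r \<noteq> 0"
  shows "lie_iso (mk (diag3 p q r) (vector[0,0,0])) (mk (diag3 (p/\<bar>p\<bar>) (q/\<bar>q\<bar>) (r/\<bar>r\<bar>)) (vector[0,0,0]))"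
proof -
  define t1 where "t1 = sqrt \<bar>q*r\<bar>"
  define t2 where "t2 = sqrt \<bar>p*r\<bar>"
  define t3 where "t3 = sqrt \<bar>p*q\<bar>"
  have n: "t1 \<noteq> 0" "t2 \<noteq> 0" "t3 \<noteq> 0" using assms by (simp_all add: t1_def t2_def t3_def)
  have s: "t1*t1 = \<bar>q*r\<bar>" "t2*t2 = \<bar>p*r\<bar>" "t3*t3 = \<bar>p*q\<bar>" by (simp_all add: t1_def t2_def t3_def)
  have T: "t1*t2*t3 = \<bar>p*q*r\<bar>"
  proof -
    have "t1*t2*t3 = sqrt (\<bar>q*r\<bar> * \<bar>p*r\<bar> * \<bar>p*q\<bar>)" by (simp add: t1_def t2_def t3_def real_sqrt_mult)
    also have "\<bar>q*r\<bar> * \<bar>p*r\<bar> * \<bar>p*q\<bar> = (p*q*r)\<^sup>2" by (simp add: abs_mult power2_eq_square algebra_simps)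
    finally show ?thesis by simp
  qed
  show ?thesis
  proof (rule iso_scale[OF n])
    show "p / \<bar>p\<bar> = t1 * t1 * p / (t1 * t2 * t3)" unfolding s T using assms by (simp add: abs_mult)
    show "q / \<bar>q\<bar> = t2 * t2 * q / (t1 * t2 * t3)" unfolding s T using assms by (simp add: abs_mult)
    show "r / \<bar>r\<bar> = t3 * t3 * r / (t1 * t2 * t3)" unfolding s T using assms by (simp add: abs_mult)
  qed simp
qed

lemma mkk_SO: "mkk SO = mk (diag3 1 1 1) (vector[0,0,0])" by (simp add: mkk_def nfa_def)
lemma mkk_SL: "mkk SL = mk (diag3 1 1 (-1)) (vector[0,0,0])" by (simp add: mkk_def nfa_def)
lemma mkk_Z: "mkk Z = mk (diag3 0 0 0) (vector[0,0,0])" by (simp add: mkk_def nfa_def)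

lemma red_A4: assumes "s1 = 1 \<or> s1 = -1" "s2 = 1 \<or> s2 = -1" "s3 = 1 \<or> s3 = -1"
  shows "\<exists>nf. valid nf \<and> lie_iso (mk (diag3 s1 s2 s3) (vector[0,0,0])) (mkk nf)"
proof -
  have SO: "lie_iso (mk (diag3 1 1 1) (vector[0,0,0])) (mkk SO)" unfolding mkk_SO by (rule lie_iso_refl)
  have SL: "lie_iso (mk (diag3 1 1 (-1)) (vector[0,0,0])) (mkk SL)" unfolding mkk_SL by (rule lie_iso_refl)
  have f1: "lie_iso (mk (diag3 (-1) (-1) (-1)) (vector[0,0,0])) (mkk SO)"
    using red_flip[of "-1" "-1" "-1"] SO lie_iso_trans by fastforce
  have f2: "lie_iso (mk (diag3 (-1) (-1) 1) (vector[0,0,0])) (mkk SL)"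
    using red_flip[of "-1" "-1" 1] SL lie_iso_trans by fastforce
  have f3: "lie_iso (mk (diag3 1 (-1) 1) (vector[0,0,0])) (mkk SL)"
    using iso_S23[of 1 "-1" 1] f2 lie_iso_trans by fastforce
  have f4: "lie_iso (mk (diag3 (-1) 1 (-1)) (vector[0,0,0])) (mkk SL)"
    using iso_S23[of "-1" 1 "-1"] SL lie_iso_trans by fastforce
  have f5: "lie_iso (mk (diag3 (-1) 1 1) (vector[0,0,0])) (mkk SL)"
    using iso_S13[of "-1" 1 1] f2 lie_iso_trans by fastforce
  have f6: "lie_iso (mk (diag3 1 (-1) (-1)) (vector[0,0,0])) (mkk SL)"
    using iso_S13[of 1 "-1" "-1"] SL lie_iso_trans by fastforce
  show ?thesis using assms
  proof (elim disjE)
    assume "s1 = 1" "s2 = 1" "s3 = 1" then show ?thesis using SO by (intro exI[of _ SO]) simp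
  next
    assume "s1 = 1" "s2 = 1" "s3 = -1" then show ?thesis using SL by (intro exI[of _ SL]) simp
  next
    assume "s1 = 1" "s2 = -1" "s3 = 1" then show ?thesis using f3 by (intro exI[of _ SL]) simp
  next
    assume "s1 = 1" "s2 = -1" "s3 = -1" then show ?thesis using f6 by (intro exI[of _ SL]) simp
  next
    assume "s1 = -1" "s2 = 1" "s3 = 1" then show ?thesis using f5 by (intro exI[of _ SL]) simp
  next
    assume "s1 = -1" "s2 = 1" "s3 = -1" then show ?thesis using f4 by (intro exI[of _ SL]) simp
  next
    assume "s1 = -1" "s2 = -1" "s3 = 1" then show ?thesis using f2 by (intro exI[of _ SL]) simp
  next
    assume "s1 = -1" "s2 = -1" "s3 = -1" then show ?thesis using f1 by (intro exI[of _ SO]) simp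
  qed
qed

lemma sgn_cases: "(p::real) \<noteq> 0 \<Longrightarrow> p/\<bar>p\<bar> = 1 \<or> p/\<bar>p\<bar> = -1"
  by (cases "p > 0") auto

lemma red_A: "\<exists>nf. valid nf \<and> lie_iso (mk (diag3 p q r) (vector[0,0,0])) (mkk nf)"
proof -
  have Z: "lie_iso (mk (diag3 0 0 0) (vector[0,0,0])) (mkk Z)" unfolding mkk_Z by (rule lie_iso_refl)
  have c1: "\<exists>nf. valid nf \<and> lie_iso (mk (diag3 x 0 0) (vector[0,0,0])) (mkk nf)" for x
  proof (cases "x = 0")
    case True then show ?thesis using Z by (intro exI[of _ Z]) simp
  next
    case False then show ?thesis using red_A1[OF False] by (intro exI[of _ H]) simp
  qed
  have c2: "\<exists>nf. valid nf \<and> lie_iso (mk (diag3 x y 0) (vector[0,0,0])) (mkk nf)" for x y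
  proof (cases "y = 0")
    case True then show ?thesis using c1 by simp
  next
    case y: False
    show ?thesis
    proof (cases "x = 0")
      case True
      have "lie_iso (mk (diag3 x y 0) (vector[0,0,0])) (mk (diag3 (-y) 0 0) (vector[0,0,0]))"
        using iso_S12[of x y 0 0] True by simp
      then show ?thesis using c1[of "-y"] lie_iso_trans by blast
    next
      case False then show ?thesis using red_A2[OF False y] by blast
    qed
  qed
  show ?thesis
  proof (cases "r = 0")
    case True then show ?thesis using c2 by simp
  next
    case r: False
    show ?thesis
    proof (cases "p = 0 \<or> q = 0")
      case True
      show ?thesis
      proof (cases "p = 0")
        case True
        have "lie_iso (mk (diag3 p q r) (vector[0,0,0])) (mk (diag3 (-r) (-q) 0) (vector[0,0,0]))"
          using iso_S13[of p q r] True by simp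
        then show ?thesis using c2[of "-r" "-q"] lie_iso_trans by blast
      next
        case False
        then have "q = 0" using \<open>p = 0 \<or> q = 0\<close> by simp
        then have "lie_iso (mk (diag3 p q r) (vector[0,0,0])) (mk (diag3 (-p) (-r) 0) (vector[0,0,0]))"
          using iso_S23[of p q r] by simp
        then show ?thesis using c2[of "-p" "-r"] lie_iso_trans by blast
      qed
    next
      case False
      then have pq: "p \<noteq> 0" "q \<noteq> 0" by auto
      show ?thesis using red_A3[OF pq r] red_A4[OF sgn_cases[OF pq(1)] sgn_cases[OF pq(2)] sgn_cases[OF r]]
        lie_iso_trans by blast
    qed
  qed
qed

lemma det_rows: "det (vector [f1, f2, f3] :: real^3^3) = crs f1 f2 \<bullet> f3"
  by (simp add: det_3 crs_def inner_vec_def sum_3 algebra_simps)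

lemma tv_rows: "transpose (vector [f1, f2, f3] :: real^3^3) *v vector[0,0,k] = k *\<^sub>R f3"
  by (simp add: vec_eq_iff forall_3 vector_matrix_mult_def sum_3)

lemma conj_ent: "((M::real^3^3) ** N ** transpose M) $ i $ j = (M $ i) \<bullet> (N *v (M $ j))"
  by (simp add: matrix_matrix_mult_def matrix_vector_mult_def inner_vec_def transpose_def sum_3 algebra_simps)

lemma symm_inner: "symm N \<Longrightarrow> f \<bullet> (N *v g) = g \<bullet> (N *v f)"
  by (drule symmE) (simp add: matrix_vector_mult_def inner_vec_def sum_3 algebra_simps)

lemma crs_crs: "crs g (crs w g) = (g \<bullet> g) *\<^sub>R w - (g \<bullet> w) *\<^sub>R g"
  by (simp add: crs_def vec_eq_iff forall_3 inner_vec_def sum_3 algebra_simps)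

lemma crs_orth: "crs w e \<bullet> w = 0"
  by (simp add: crs_def inner_vec_def sum_3 algebra_simps)

lemma perp2: assumes w: "w \<noteq> 0"
  shows "\<exists>g1 g2. g1 \<bullet> w = 0 \<and> g2 \<bullet> w = 0 \<and> crs g1 g2 = (g1 \<bullet> g1) *\<^sub>R w \<and> g1 \<noteq> 0"
proof -
  have "crs w E1 \<noteq> 0 \<or> crs w E2 \<noteq> 0"
  proof (rule ccontr)
    assume "\<not> ?thesis"
    then have "crs w E1 = 0" "crs w E2 = 0" by auto
    then have "w = 0" by (simp add: crs_def E1_def E2_def vec_eq_iff forall_3)
    then show False using w by simp
  qed
  then obtain e where e: "crs w e \<noteq> 0" by blast
  define g1 where "g1 = crs w e"
  define g2 where "g2 = crs w g1"
  have o1: "g1 \<bullet> w = 0" unfolding g1_def by (rule crs_orth)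
  have o2: "g2 \<bullet> w = 0" unfolding g2_def by (rule crs_orth)
  have "crs g1 g2 = (g1 \<bullet> g1) *\<^sub>R w" unfolding g2_def crs_crs using o1 by (simp add: inner_commute)
  then show ?thesis using o1 o2 e g1_def by blast
qed

lemma lc_crs: "crs (a *\<^sub>R x + b *\<^sub>R y) (c *\<^sub>R x + d *\<^sub>R y) = (a*d - b*c) *\<^sub>R crs x y"
  by (simp add: crs_def vec_eq_iff forall_3 algebra_simps)

lemma lc_inner_l: "(a *\<^sub>R x + b *\<^sub>R y) \<bullet> (N *v z) = a * (x \<bullet> (N *v z)) + b * (y \<bullet> (N *v z))"
  by (simp add: inner_add_left)

lemma lc_inner_r: "x \<bullet> ((N::real^3^3) *v (c *\<^sub>R y + d *\<^sub>R z)) = c * (x \<bullet> (N *v y)) + d * (x \<bullet> (N *v z))"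
  by (simp add: mv_add matrix_vector_mult_scaleR inner_add_right)

lemma orth2D: assumes s: "symm N" and d: "crs g1 g2 \<bullet> g3 \<noteq> 0"
  and o1: "g1 \<bullet> (N *v g3) = 0" and o2: "g2 \<bullet> (N *v g3) = 0"
  shows "\<exists>f1 f2. crs f1 f2 \<bullet> g3 \<noteq> 0 \<and> f1 \<bullet> (N *v f2) = 0 \<and> f1 \<bullet> (N *v g3) = 0 \<and> f2 \<bullet> (N *v g3) = 0"
proof -
  define p where "p = g1 \<bullet> (N *v g1)"
  define r where "r = g1 \<bullet> (N *v g2)"
  define q where "q = g2 \<bullet> (N *v g2)"
  have r': "g2 \<bullet> (N *v g1) = r" unfolding r_def by (rule symm_inner[OF s])
  have gen: "\<exists>f1 f2. crs f1 f2 \<bullet> g3 \<noteq> 0 \<and> f1 \<bullet> (N *v f2) = 0 \<and> f1 \<bullet> (N *v g3) = 0 \<and> f2 \<bullet> (N *v g3) = 0"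
    if "a*dd - b*c \<noteq> 0" "(a*c) * p + (a*dd) * r + (b*c) * r + (b*dd) * q = 0" for a b c dd
  proof (intro exI conjI)
    let ?f1 = "a *\<^sub>R g1 + b *\<^sub>R g2" and ?f2 = "c *\<^sub>R g1 + dd *\<^sub>R g2"
    show "crs ?f1 ?f2 \<bullet> g3 \<noteq> 0" unfolding lc_crs using that(1) d by simp
    show "?f1 \<bullet> (N *v ?f2) = 0" unfolding lc_inner_l lc_inner_r r' p_def[symmetric] q_def[symmetric] r_def[symmetric]
      using that(2) by (simp add: algebra_simps)
    show "?f1 \<bullet> (N *v g3) = 0" unfolding lc_inner_l using o1 o2 by simp
    show "?f2 \<bullet> (N *v g3) = 0" unfolding lc_inner_l using o1 o2 by simp
  qed
  show ?thesis
  proof (cases "p = 0")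
    case False
    show ?thesis by (rule gen[of 1 p 0 "-r"]) (use False in \<open>simp_all add: algebra_simps\<close>)
  next
    case p0: True
    show ?thesis
    proof (cases "q = 0")
      case False
      show ?thesis by (rule gen[of q 1 "-r" 0]) (use False in \<open>simp_all add: algebra_simps\<close>)
    next
      case True
      show ?thesis by (rule gen[of 1 "-1" 1 1]) (use True p0 in \<open>simp_all add: algebra_simps\<close>)
    qed
  qed
qed

lemma fin_diag:
  assumes s: "symm N" and d: "crs f1 f2 \<bullet> g3 \<noteq> 0" and o12: "f1 \<bullet> (N *v f2) = 0"
    and o13: "f1 \<bullet> (N *v g3) = 0" and o23: "f2 \<bullet> (N *v g3) = 0" and a: "a = k *\<^sub>R g3"
  shows "\<exists>M k. invertible M \<and> transpose M *v vector[0,0,k] = a \<and>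
           (\<forall>i j. i \<noteq> j \<longrightarrow> ((M::real^3^3) ** N ** transpose M) $ i $ j = 0)"
proof (intro exI conjI)
  let ?M = "vector [f1, f2, g3] :: real^3^3"
  show "invertible ?M" unfolding invertible_det_nz det_rows using d .
  show "transpose ?M *v vector[0,0,k] = a" unfolding tv_rows a ..
  have o21: "f2 \<bullet> (N *v f1) = 0" using o12 symm_inner[OF s] by metis
  have o31: "g3 \<bullet> (N *v f1) = 0" using o13 symm_inner[OF s] by metis
  have o32: "g3 \<bullet> (N *v f2) = 0" using o23 symm_inner[OF s] by metis
  show "\<forall>i j. i \<noteq> j \<longrightarrow> (?M ** N ** transpose ?M) $ i $ j = 0"
    unfolding conj_ent using o12 o13 o23 o21 o31 o32 by (simp add: forall_3)
qed

lemma qnz: assumes s: "symm N" and n: "N \<noteq> 0" shows "\<exists>v. v \<bullet> (N *v v) \<noteq> 0"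
proof (rule ccontr)
  assume "\<not> ?thesis"
  then have h: "v \<bullet> (N *v v) = 0" for v by blast
  have e: "N$1$1 = 0" "N$2$2 = 0" "N$3$3 = 0"
    "N$1$1 + N$1$2 + N$2$1 + N$2$2 = 0" "N$1$1 + N$1$3 + N$3$1 + N$3$3 = 0" "N$2$2 + N$2$3 + N$3$2 + N$3$3 = 0"
    using h[of "vector[1,0,0]"] h[of "vector[0,1,0]"] h[of "vector[0,0,1]"] h[of "vector[1,1,0]"]
      h[of "vector[1,0,1]"] h[of "vector[0,1,1]"]
    by (simp_all add: matrix_vector_mult_def inner_vec_def sum_3 algebra_simps)
  have "N = 0" using e symmE[OF s] by (simp add: vec_eq_iff forall_3)
  then show False using n by simp
qed

lemma diagonalize: assumes s: "symm N" and na: "N *v a = 0"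
  shows "\<exists>M k. invertible M \<and> transpose M *v vector[0,0,k] = a \<and>
           (\<forall>i j. i \<noteq> j \<longrightarrow> ((M::real^3^3) ** N ** transpose M) $ i $ j = 0)"
proof (cases "a = 0")
  case False
  obtain g1 g2 where g: "g1 \<bullet> a = 0" "g2 \<bullet> a = 0" "crs g1 g2 = (g1 \<bullet> g1) *\<^sub>R a" "g1 \<noteq> 0"
    using perp2[OF False] by blast
  have d: "crs g1 g2 \<bullet> a \<noteq> 0" using g(3,4) False by simp
  obtain f1 f2 where f: "crs f1 f2 \<bullet> a \<noteq> 0" "f1 \<bullet> (N *v f2) = 0" "f1 \<bullet> (N *v a) = 0" "f2 \<bullet> (N *v a) = 0"
    using orth2D[OF s d] na by auto
  show ?thesis by (rule fin_diag[OF s f, of a 1]) simp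
next
  case a0: True
  show ?thesis
  proof (cases "N = 0")
    case True
    have "crs E1 E2 \<bullet> E3 \<noteq> 0" by (simp add: crs_def E1_def E2_def E3_def inner_vec_def sum_3)
    then show ?thesis by (rule fin_diag[OF s, of E1 E2 E3 a 0]) (simp_all add: True a0)
  next
    case False
    obtain v where v: "v \<bullet> (N *v v) \<noteq> 0" using qnz[OF s False] by blast
    let ?w = "N *v v"
    have w: "?w \<noteq> 0" using v by auto
    obtain g1 g2 where g: "g1 \<bullet> ?w = 0" "g2 \<bullet> ?w = 0" "crs g1 g2 = (g1 \<bullet> g1) *\<^sub>R ?w" "g1 \<noteq> 0"
      using perp2[OF w] by blast
    have d: "crs g1 g2 \<bullet> v \<noteq> 0" using g(3,4) v by (simp add: inner_commute)
    obtain f1 f2 where f: "crs f1 f2 \<bullet> v \<noteq> 0" "f1 \<bullet> (N *v f2) = 0" "f1 \<bullet> (N *v v) = 0" "f2 \<bullet> (N *v v) = 0"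
      using orth2D[OF s d g(1) g(2)] by blast
    show ?thesis by (rule fin_diag[OF s f, of a 0]) (simp add: a0)
  qed
qed

lemma canon: assumes lb: "lie_bracket br" shows "\<exists>k. valid k \<and> lie_iso br (mkk k)"
proof -
  let ?N = "getN br" and ?a = "geta br"
  have br: "br = mk ?N ?a" and s: "symm ?N" and na: "?N *v ?a = 0" using rep[OF lb] by auto
  obtain M :: "real^3^3" and k where M: "invertible M" "transpose M *v vector[0,0,k] = ?a"
    "\<forall>i j. i \<noteq> j \<longrightarrow> (M ** ?N ** transpose M) $ i $ j = 0"
    using diagonalize[OF s na] by blast
  define D where "D = (1 / det M) *\<^sub>R (M ** ?N ** transpose M)"
  have i1: "lie_iso (mk ?N ?a) (mk D (vector[0,0,k]))" unfolding D_def by (rule iso_step[OF M(1) M(2)])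
  have Dd: "D = diag3 (D$1$1) (D$2$2) (D$3$3)"
    using M(3) by (simp add: D_def vec_eq_iff forall_3)
  have "D *v vector[0,0,k] = (1 / det M) *\<^sub>R (M *v (?N *v (transpose M *v vector[0,0,k])))"
    unfolding D_def by (simp add: matrix_vector_mul_assoc scaleR_matrix_vector_assoc matrix_mul_assoc del: transpose_matrix_vector)
  also have "\<dots> = 0" using M(2) na by (simp del: transpose_matrix_vector)
  finally have "D *v vector[0,0,k] = 0" .
  then have dk: "D$3$3 * k = 0" by (subst (asm) Dd) (simp add: vec_eq_iff forall_3 matrix_vector_mult_def sum_3)
  have "\<exists>nf. valid nf \<and> lie_iso (mk D (vector[0,0,k])) (mkk nf)"
  proof (cases "k = 0")
    case True
    then show ?thesis using red_A[of "D$1$1" "D$2$2" "D$3$3"] Dd by simp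
  next
    case False
    then have "D$3$3 = 0" using dk by simp
    then show ?thesis using red_B[OF False, of "D$1$1" "D$2$2"] Dd by simp
  qed
  then show ?thesis using i1 br lie_iso_trans by metis
qed

definition SIW :: "nf \<Rightarrow> nf \<Rightarrow> bool" where
  "SIW k1 k2 \<longleftrightarrow> (\<exists>P \<alpha>. invertible P \<and> (\<forall>i. \<alpha> i \<in> {0::nat,1}) \<and>
     contracts_via (mkk k1) (\<lambda>e. P ** diag_pow e \<alpha> ** mat 1) (mkk k2))"

lemma SIW_I: "invertible P \<Longrightarrow> (\<forall>i. \<alpha> i \<in> {0::nat,1}) \<Longrightarrow>
   contracts_via (mkk k1) (\<lambda>e. P ** diag_pow e \<alpha> ** mat 1) (mkk k2) \<Longrightarrow> SIW k1 k2"
  unfolding SIW_def by blast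

lemma simple_iw: assumes "k2 = k1 \<or> k2 = Z \<or> (k2 = H \<and> k1 \<noteq> Z \<and> k1 \<noteq> A3) \<or> (k1 = SO \<and> k2 = Eu) \<or>
    (k1 = SL \<and> k2 = Eu) \<or> (k1 = SL \<and> k2 = Ep) \<or> (k1 = J \<and> k2 = A3)"
  and "\<not> (k1 = SO \<and> k2 = H)"
  shows "SIW k1 k2"
proof -
  have triv: "SIW k k" for k by (rule SIW_I[OF inv_mat1 _ iw_triv]) simp
  have z: "SIW k Z" for k by (rule SIW_I[OF inv_mat1 _ iw_Z]) simp
  have h: "SIW k H" if "k \<noteq> Z" "k \<noteq> A3" "k \<noteq> SO" for k
  proof (cases k)
    case (B c) then show ?thesis by (auto intro!: SIW_I[OF inv_mat1 _ iw_H_B])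
  qed (use that triv in \<open>auto intro!: SIW_I[OF inv_mat1 _ iw_H_E2] SIW_I[OF inv_mat1 _ iw_H_E11]
        SIW_I[OF inv_mat1 _ iw_H_J] SIW_I[OF inv_PH _ iw_SL_H]\<close>)
  have f1: "SIW SO Eu" by (rule SIW_I[OF inv_mat1 _ iw_SO_E2]) simp
  have f2: "SIW SL Eu" by (rule SIW_I[OF inv_mat1 _ iw_SL_E2]) simp
  have f3: "SIW SL Ep" by (rule SIW_I[OF inv_P11 _ iw_SL_E11]) simp
  have f4: "SIW J A3" by (rule SIW_I[OF inv_mat1 _ iw_J_A3]) simp
  show ?thesis using assms triv z h f1 f2 f3 f4 by auto
qed

lemma transfer_back:
  assumes i1: "lie_iso br (mkk k1)" and i2: "lie_iso br0 (mkk k2)" and P: "invertible P"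
    and c: "contracts_via (mkk k1) (\<lambda>e. P ** diag_pow e \<alpha> ** mat 1) (mkk k2)"
  shows "\<exists>P' Q br1. invertible P' \<and> invertible Q \<and> contracts_via br (\<lambda>e. P' ** diag_pow e \<alpha> ** Q) br1
          \<and> lie_iso br1 br0"
proof -
  obtain A where A: "invertible A" "br = act A (mkk k1)" using i1 lie_iso_act by blast
  have e: "mkk k1 = act (matrix_inv A) br" using A act_inv by simp
  have Ai: "invertible (matrix_inv A)" using A invertible_inv by blast
  have "contracts_via br (\<lambda>e. matrix_inv A ** (P ** diag_pow e \<alpha> ** mat 1)) (mkk k2)"
    using contr_src[OF Ai] c e by simp
  then have "contracts_via br (\<lambda>e. (matrix_inv A ** P) ** diag_pow e \<alpha> ** mat 1) (mkk k2)"
    by (simp add: matrix_mul_assoc)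
  moreover have "invertible (matrix_inv A ** P)" using Ai P invertible_mult by blast
  moreover have "lie_iso (mkk k2) br0" using i2 lie_iso_sym by blast
  ultimately show ?thesis using inv_mat1 by blast
qed

lemma to_nf:
  assumes i1: "lie_iso br (mkk k1)" and i2: "lie_iso br0 (mkk k2)" and c: "contracts_via br U br0"
  shows "\<exists>V. contracts_via (mkk k1) V (mkk k2)"
proof -
  obtain A where A: "invertible A" "br = act A (mkk k1)" using i1 lie_iso_act by blast
  obtain B where B: "invertible B" "br0 = act B (mkk k2)" using i2 lie_iso_act by blast
  have c1: "contracts_via (mkk k1) (\<lambda>e. A ** U e) br0" using contr_src[OF A(1)] c A(2) by simp
  have Bi: "invertible (matrix_inv B)" using B invertible_inv by blast
  have "contracts_via (mkk k1) (\<lambda>e. A ** U e ** matrix_inv B) (act (matrix_inv B) br0)"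
    by (rule contr_tgt[OF Bi c1])
  moreover have "act (matrix_inv B) br0 = mkk k2" using B act_inv by simp
  ultimately show ?thesis by auto
qed

lemma part3:
  assumes i1: "lie_iso br (mkk SO)" and i2: "lie_iso br0 (mkk H)" and P: "invertible P" and Q: "invertible Q"
    and a01: "\<forall>i. \<alpha> i \<in> {0::nat,1}" and c: "contracts_via br (\<lambda>e. P ** diag_pow e \<alpha> ** Q) br1"
    and i3: "lie_iso br1 br0"
  shows False
proof -
  obtain A where A: "invertible A" "br = act A (mkk SO)" using i1 lie_iso_act by blast
  have c1: "contracts_via (mkk SO) (\<lambda>e. A ** (P ** diag_pow e \<alpha> ** Q)) br1"
    using contr_src[OF A(1)] c A(2) by simp
  have Qi: "invertible (matrix_inv Q)" using Q invertible_inv by blast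
  have c2: "contracts_via (mkk SO) (\<lambda>e. A ** (P ** diag_pow e \<alpha> ** Q) ** matrix_inv Q) (act (matrix_inv Q) br1)"
    by (rule contr_tgt[OF Qi c1])
  have fe: "(\<lambda>e. A ** (P ** diag_pow e \<alpha> ** Q) ** matrix_inv Q) = (\<lambda>e. (A ** P) ** diag_pow e \<alpha> ** mat 1)"
  proof
    fix e
    have "A ** (P ** diag_pow e \<alpha> ** Q) ** matrix_inv Q = (A ** P) ** diag_pow e \<alpha> ** (Q ** matrix_inv Q)"
      by (simp add: matrix_mul_assoc)
    then show "A ** (P ** diag_pow e \<alpha> ** Q) ** matrix_inv Q = (A ** P) ** diag_pow e \<alpha> ** mat 1"
      using inv_ok(1)[OF Q] by simp
  qed
  have c3: "contracts_via (mkk SO) (\<lambda>e. (A ** P) ** diag_pow e \<alpha> ** mat 1) (act (matrix_inv Q) br1)"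
    using c2 fe by simp
  have "lie_iso br1 (act (matrix_inv Q) br1)" by (rule lie_iso_actI[OF Qi])
  then have "lie_iso (act (matrix_inv Q) br1) (mkk H)"
    using lie_iso_sym lie_iso_trans i3 i2 by metis
  then show False using part3_nf[OF invertible_mult[OF A(1) P] a01 c3] by blast
qed

lemma main:
  assumes canon: "\<And>b. lie_bracket b \<Longrightarrow> \<exists>k. valid k \<and> lie_iso b (mkk k)"
  and hb: "lie_bracket br" "lie_bracket br0" "continuous_contraction br br0"
  shows "(\<exists>P Q :: real^3^3. \<exists>\<alpha> :: 3 \<Rightarrow> nat. \<exists>br1.
             invertible P \<and> invertible Q \<and>
             contracts_via br (\<lambda>\<epsilon>. P ** diag_pow \<epsilon> \<alpha> ** Q) br1 \<and> lie_iso br1 br0)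
       \<and> (\<not> (lie_iso br so3_br \<and> lie_iso br0 h3_br) \<longrightarrow>
            (\<exists>P Q :: real^3^3. \<exists>\<alpha> :: 3 \<Rightarrow> nat. \<exists>br1.
             invertible P \<and> invertible Q \<and> (\<forall>i. \<alpha> i \<in> {0, 1}) \<and>
             contracts_via br (\<lambda>\<epsilon>. P ** diag_pow \<epsilon> \<alpha> ** Q) br1 \<and> lie_iso br1 br0))
       \<and> (lie_iso br so3_br \<and> lie_iso br0 h3_br \<longrightarrow>
            \<not> (\<exists>P Q :: real^3^3. \<exists>\<alpha> :: 3 \<Rightarrow> nat. \<exists>br1.
             invertible P \<and> invertible Q \<and> (\<forall>i. \<alpha> i \<in> {0, 1}) \<and>
             contracts_via br (\<lambda>\<epsilon>. P ** diag_pow \<epsilon> \<alpha> ** Q) br1 \<and> lie_iso br1 br0))"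
proof -
  obtain k1 where k1: "valid k1" "lie_iso br (mkk k1)" using canon hb(1) by blast
  obtain k2 where k2: "valid k2" "lie_iso br0 (mkk k2)" using canon hb(2) by blast
  obtain U where U: "contracts_via br U br0" using hb(3) continuous_contraction_def by blast
  obtain V where V: "contracts_via (mkk k1) V (mkk k2)" using to_nf[OF k1(2) k2(2) U] by blast
  have dg: "k2 = k1 \<or> k2 = Z \<or> (k2 = H \<and> k1 \<noteq> Z \<and> k1 \<noteq> A3) \<or> (k1 = SO \<and> k2 = Eu) \<or>
    (k1 = SL \<and> k2 = Eu) \<or> (k1 = SL \<and> k2 = Ep) \<or> (k1 = J \<and> k2 = A3)"
    by (rule deg[OF k1(1) k2(1) V])
  have P2: "\<exists>P Q :: real^3^3. \<exists>\<alpha> :: 3 \<Rightarrow> nat. \<exists>br1.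
             invertible P \<and> invertible Q \<and> (\<forall>i. \<alpha> i \<in> {0, 1}) \<and>
             contracts_via br (\<lambda>\<epsilon>. P ** diag_pow \<epsilon> \<alpha> ** Q) br1 \<and> lie_iso br1 br0"
    if ns: "\<not> (k1 = SO \<and> k2 = H)"
  proof -
    obtain P \<alpha> where P: "invertible P" "\<forall>i. \<alpha> i \<in> {0::nat,1}"
      "contracts_via (mkk k1) (\<lambda>e. P ** diag_pow e \<alpha> ** mat 1) (mkk k2)"
      using simple_iw[OF dg ns] unfolding SIW_def by blast
    show ?thesis using transfer_back[OF k1(2) k2(2) P(1) P(3)] P(2) by blast
  qed
  have iffSO: "lie_iso br so3_br \<longleftrightarrow> k1 = SO"
  proof
    assume "lie_iso br so3_br"
    then have "lie_iso (mkk k1) (mkk SO)" using k1(2) lie_iso_sym lie_iso_trans so3_mkk by metis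
    then show "k1 = SO" using nf_unique[OF k1(1)] by simp
  qed (use k1 so3_mkk in simp)
  have iffH: "lie_iso br0 h3_br \<longleftrightarrow> k2 = H"
  proof
    assume "lie_iso br0 h3_br"
    then have "lie_iso (mkk k2) (mkk H)" using k2(2) lie_iso_sym lie_iso_trans h3_mkk by metis
    then show "k2 = H" using nf_unique[OF k2(1)] by simp
  qed (use k2 h3_mkk in simp)
  have P1: "\<exists>P Q :: real^3^3. \<exists>\<alpha> :: 3 \<Rightarrow> nat. \<exists>br1.
             invertible P \<and> invertible Q \<and>
             contracts_via br (\<lambda>\<epsilon>. P ** diag_pow \<epsilon> \<alpha> ** Q) br1 \<and> lie_iso br1 br0"
  proof (cases "k1 = SO \<and> k2 = H")
    case True
    then have a: "lie_iso br (mkk SO)" and b: "lie_iso br0 (mkk H)" using k1 k2 by auto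
    show ?thesis using transfer_back[OF a b inv_mat1 iw_SO_H] by blast
  next
    case False
    then show ?thesis using P2 by blast
  qed
  have P3: "\<not> (\<exists>P Q :: real^3^3. \<exists>\<alpha> :: 3 \<Rightarrow> nat. \<exists>br1.
             invertible P \<and> invertible Q \<and> (\<forall>i. \<alpha> i \<in> {0, 1}) \<and>
             contracts_via br (\<lambda>\<epsilon>. P ** diag_pow \<epsilon> \<alpha> ** Q) br1 \<and> lie_iso br1 br0)"
    if "lie_iso br so3_br" "lie_iso br0 h3_br"
    using part3 that so3_mkk h3_mkk by metis
  show ?thesis using P1 P2 P3 iffSO iffH by blast
qed

theorem theorem2:
  fixes br br0 :: bracket
  assumes "lie_bracket br" and "lie_bracket br0"
    and "continuous_contraction br br0"
  shows "(\<exists>P Q :: real^3^3. \<exists>\<alpha> :: 3 \<Rightarrow> nat. \<exists>br1.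
             invertible P \<and> invertible Q \<and>
             contracts_via br (\<lambda>\<epsilon>. P ** diag_pow \<epsilon> \<alpha> ** Q) br1 \<and> lie_iso br1 br0)
       \<and> (\<not> (lie_iso br so3_br \<and> lie_iso br0 h3_br) \<longrightarrow>
            (\<exists>P Q :: real^3^3. \<exists>\<alpha> :: 3 \<Rightarrow> nat. \<exists>br1.
             invertible P \<and> invertible Q \<and> (\<forall>i. \<alpha> i \<in> {0, 1}) \<and>
             contracts_via br (\<lambda>\<epsilon>. P ** diag_pow \<epsilon> \<alpha> ** Q) br1 \<and> lie_iso br1 br0))
       \<and> (lie_iso br so3_br \<and> lie_iso br0 h3_br \<longrightarrow>
            \<not> (\<exists>P Q :: real^3^3. \<exists>\<alpha> :: 3 \<Rightarrow> nat. \<exists>br1.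
             invertible P \<and> invertible Q \<and> (\<forall>i. \<alpha> i \<in> {0, 1}) \<and>
             contracts_via br (\<lambda>\<epsilon>. P ** diag_pow \<epsilon> \<alpha> ** Q) br1 \<and> lie_iso br1 br0))"
  by (rule main[OF canon assms(1) assms(2) assms(3)])

end
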